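(* Let $(X,\rho)$ be a complete separable metric space such that $\rho$ is an ultrametric, i.e. $\rho(x,z)\le\max\{\rho(x,y),\rho(y,z)\}$ for all $x,y,z\in X$. Let $0<p<\infty$ and let $\Phi\colon\mathcal{W}_p(X)\to\mathcal{W}_p(X)$ be an isometry (distance preserving bijection). Then there exists an isometry $\psi$ of $X$ such that $\Phi(\mu)=\psi_\#\mu$ for all $\mu\in\mathcal{W}_p(X)$.
   Context: For $0<p<\infty$, $\mathcal{W}_p(X)$ is the set of Borel probability measures $\mu$ on $X$ with $\int_X\rho(x,\hat x)^p\,d\mu(x)<\infty$ for some $\hat x\in X$, equipped with $d_{\mathcal{W}_p}(\mu,\nu)=\big(\inf_{\pi\in\Pi(\mu,\nu)}\int_{X\times X}\rho(x,y)^p\,d\pi(x,y)\big)^{\min\{1/p,1\}}$, where $\Pi(\mu,\nu)$ is the set of Borel probability measures on $X\times X$ with marginals $\mu,\nu$. The push-forward is $(g_\#\mu)(A)=\mu(g^{-1}[A])$. *)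

theory Defs
  imports "HOL-Probability.Probability"
begin

definition ultrametric :: "('a::metric_space) itself \<Rightarrow> bool" where
  "ultrametric _ \<longleftrightarrow> (\<forall>x y z::'a. dist x z \<le> max (dist x y) (dist y z))"

definition wasserstein_space :: "real \<Rightarrow> ('a::metric_space) measure set" where
  "wasserstein_space p = {\<mu>. sets \<mu> = sets (borel :: 'a measure) \<and> prob_space \<mu> \<and>
      (\<exists>x0::'a. (\<integral>\<^sup>+ x. ennreal (dist x x0 powr p) \<partial>\<mu>) < \<infinity>)}"

definition couplings :: "('a::metric_space) measure \<Rightarrow> 'a measure \<Rightarrow> ('a \<times> 'a) measure set" where
  "couplings \<mu> \<nu> = {\<pi>. sets \<pi> = sets (borel :: ('a \<times> 'a) measure) \<and> prob_space \<pi> \<and>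
      distr \<pi> borel fst = \<mu> \<and> distr \<pi> borel snd = \<nu>}"

text \<open>Wasserstein distance (the infimum is finite on the Wasserstein space).\<close>
definition wasserstein_dist :: "real \<Rightarrow> ('a::metric_space) measure \<Rightarrow> 'a measure \<Rightarrow> real" where
  "wasserstein_dist p \<mu> \<nu> =
     enn2real (INF \<pi>\<in>couplings \<mu> \<nu>. \<integral>\<^sup>+ xy. ennreal (dist (fst xy) (snd xy) powr p) \<partial>\<pi>)
       powr (min (1/p) 1)"

end

theory Submission
  imports Defs
begin

lemma ultra_dist:
  assumes "ultrametric TYPE('a::metric_space)"
  shows "dist (x::'a) z \<le> max (dist x y) (dist y z)"
  using assms unfolding ultrametric_def by blast

lemma ultra_powr:
  assumes "ultrametric TYPE('a::metric_space)" "0 < p"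
  shows "dist (x::'a) z powr p \<le> max (dist x y powr p) (dist y z powr p)"
proof (cases "dist x y \<le> dist y z")
  case True
  then have "dist x z \<le> dist y z" using ultra_dist[OF assms(1), of x z y] by simp
  then have "dist x z powr p \<le> dist y z powr p" using assms(2) by (intro powr_mono2) auto
  then show ?thesis by simp
next
  case False
  then have "dist x z \<le> dist x y" using ultra_dist[OF assms(1), of x z y] by simp
  then have "dist x z powr p \<le> dist x y powr p" using assms(2) by (intro powr_mono2) auto
  then show ?thesis by simp
qed

lemma ultra_powr_add:
  assumes "ultrametric TYPE('a::metric_space)" "0 < p"
  shows "dist (x::'a) z powr p \<le> dist x y powr p + dist y z powr p"
  using ultra_powr[OF assms, of x z y] powr_ge_zero[of "dist x y" p] powr_ge_zero[of "dist y z" p]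
  by linarith

lemma sets_borel_pair:
  "sets (borel \<Otimes>\<^sub>M borel) = sets (borel :: ('a::second_countable_topology \<times> 'a) measure)"
  by (rule arg_cong[where f=sets, OF borel_prod])

lemma meas_dp: "(\<lambda>y. dist y (x::'a::polish_space) powr p) \<in> borel_measurable borel"
  by measurable

lemma meas_dp2: "(\<lambda>y. dist (x::'a::polish_space) y powr p) \<in> borel_measurable borel"
  by measurable

lemma meas_dp3: "(\<lambda>w. dist (fst w) (snd w::'a::polish_space) powr p) \<in> borel_measurable (borel \<Otimes>\<^sub>M borel)"
  by measurable

lemma wsD:
  assumes "\<mu> \<in> wasserstein_space p"
  shows "sets \<mu> = sets borel" "prob_space \<mu>" "space \<mu> = UNIV"
  using assms unfolding wasserstein_space_def by (auto dest: sets_eq_imp_space_eq)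

lemma ws_moment:
  fixes \<mu> :: "'a::polish_space measure"
  assumes U: "ultrametric TYPE('a)" and p: "0 < p" and mu: "\<mu> \<in> wasserstein_space p"
  shows "(\<integral>\<^sup>+ y. ennreal (dist y x powr p) \<partial>\<mu>) < \<top>"
proof -
  obtain x0 where x0: "(\<integral>\<^sup>+ y. ennreal (dist y x0 powr p) \<partial>\<mu>) < \<top>"
    using mu unfolding wasserstein_space_def by auto
  interpret prob_space \<mu> using wsD[OF mu] by simp
  have ms: "sets \<mu> = sets borel" using wsD[OF mu] by simp
  have le: "ennreal (dist y x powr p) \<le> ennreal (dist y x0 powr p) + ennreal (dist x0 x powr p)" for y
    using ultra_powr_add[OF U p, of y x x0] by (simp add: ennreal_plus[symmetric] del: ennreal_plus)
  have "(\<integral>\<^sup>+ y. ennreal (dist y x powr p) \<partial>\<mu>) \<le> (\<integral>\<^sup>+ y. ennreal (dist y x0 powr p) + ennreal (dist x0 x powr p) \<partial>\<mu>)"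
    by (rule nn_integral_mono) (rule le)
  also have "\<dots> = (\<integral>\<^sup>+ y. ennreal (dist y x0 powr p) \<partial>\<mu>) + (\<integral>\<^sup>+ y. ennreal (dist x0 x powr p) \<partial>\<mu>)"
    by (rule nn_integral_add) (auto simp: measurable_cong_sets[OF ms refl])
  also have "(\<integral>\<^sup>+ y. ennreal (dist x0 x powr p) \<partial>\<mu>) = ennreal (dist x0 x powr p)"
    using emeasure_space_1 by simp
  also have "(\<integral>\<^sup>+ y. ennreal (dist y x0 powr p) \<partial>\<mu>) + ennreal (dist x0 x powr p) < \<top>"
    using x0 by simp
  finally show ?thesis .
qed

lemma ws_moment':
  fixes \<mu> :: "'a::polish_space measure"
  assumes U: "ultrametric TYPE('a)" and p: "0 < p" and mu: "\<mu> \<in> wasserstein_space p"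
  shows "(\<integral>\<^sup>+ y. ennreal (dist x y powr p) \<partial>\<mu>) < \<top>"
  using ws_moment[OF assms, of x] by (simp add: dist_commute)

definition Tc :: "real \<Rightarrow> 'a::metric_space measure \<Rightarrow> 'a measure \<Rightarrow> real" where
  "Tc p \<mu> \<nu> = enn2real (INF \<pi>\<in>couplings \<mu> \<nu>. \<integral>\<^sup>+ xy. ennreal (dist (fst xy) (snd xy) powr p) \<partial>\<pi>)"

lemma wd_Tc: "wasserstein_dist p \<mu> \<nu> = Tc p \<mu> \<nu> powr (min (1/p) 1)"
  by (simp add: wasserstein_dist_def Tc_def)

lemma Tc_nonneg: "0 \<le> Tc p \<mu> \<nu>"
  by (simp add: Tc_def)

lemma powr_inj_nonneg:
  fixes a b q :: real
  assumes "0 \<le> a" "0 \<le> b" "0 < q" "a powr q = b powr q"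
  shows "a = b"
proof -
  have "(a powr q) powr (1/q) = a powr (q * (1/q))" by (rule powr_powr)
  also have "q * (1/q) = 1" using assms(3) by simp
  finally have A: "(a powr q) powr (1/q) = a" using assms(1) by simp
  have "(b powr q) powr (1/q) = b powr (q * (1/q))" by (rule powr_powr)
  also have "q * (1/q) = 1" using assms(3) by simp
  finally have B: "(b powr q) powr (1/q) = b" using assms(2) by simp
  show ?thesis using A B assms(4) by metis
qed

lemma Tc_eqI:
  assumes "0 < p" "wasserstein_dist p a b = wasserstein_dist p c d"
  shows "Tc p a b = Tc p c d"
proof (rule powr_inj_nonneg[OF Tc_nonneg Tc_nonneg])
  show "0 < min (1/p) 1" using assms(1) by simp
  show "Tc p a b powr min (1 / p) 1 = Tc p c d powr min (1 / p) 1"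
    using assms(2) unfolding wd_Tc .
qed

lemma couplingsD:
  assumes "\<pi> \<in> couplings \<mu> \<nu>"
  shows "sets \<pi> = sets borel" "prob_space \<pi>" "distr \<pi> borel fst = \<mu>" "distr \<pi> borel snd = \<nu>"
  using assms unfolding couplings_def mem_Collect_eq by blast+

lemma meas_pi:
  fixes \<pi> :: "('a::second_countable_topology \<times> 'a) measure"
  assumes "sets \<pi> = sets borel" "f \<in> measurable (borel \<Otimes>\<^sub>M borel) N"
  shows "f \<in> measurable \<pi> N"
proof -
  have "sets \<pi> = sets (borel \<Otimes>\<^sub>M borel)" using assms(1) sets_borel_pair[where 'a='a] by simp
  then show ?thesis using assms(2) by (subst measurable_cong_sets[OF _ refl])
qed

lemma distr_pair_snd':
  assumes "prob_space M" "prob_space N"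
  shows "distr (M \<Otimes>\<^sub>M N) N snd = N"
proof (intro measure_eqI)
  interpret M: prob_space M by fact
  interpret N: prob_space N by fact
  fix A assume A: "A \<in> sets (distr (M \<Otimes>\<^sub>M N) N snd)"
  from A have "emeasure (distr (M \<Otimes>\<^sub>M N) N snd) A = emeasure (M \<Otimes>\<^sub>M N) (space M \<times> A)"
    by (auto simp add: emeasure_distr space_pair_measure dest: sets.sets_into_space intro!: arg_cong2[where f=emeasure])
  with A show "emeasure (distr (M \<Otimes>\<^sub>M N) N snd) A = emeasure N A"
    by (simp add: N.emeasure_pair_measure_Times M.emeasure_space_1)
qed simp

lemma pair_coupling:
  fixes \<mu> \<nu> :: "'a::polish_space measure"
  assumes "sets \<mu> = sets borel" "sets \<nu> = sets borel" "prob_space \<mu>" "prob_space \<nu>"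
  shows "\<mu> \<Otimes>\<^sub>M \<nu> \<in> couplings \<mu> \<nu>"
proof -
  have s: "sets (\<mu> \<Otimes>\<^sub>M \<nu>) = sets (borel :: ('a \<times> 'a) measure)"
    using sets_pair_measure_cong[OF assms(1,2)] sets_borel_pair[where 'a='a] by simp
  have "distr (\<mu> \<Otimes>\<^sub>M \<nu>) borel fst = distr (\<mu> \<Otimes>\<^sub>M \<nu>) \<mu> fst"
    using assms(1) by (intro distr_cong) simp_all
  also have "\<dots> = \<mu>" using prob_space.distr_pair_fst[OF assms(4)] .
  finally have 1: "distr (\<mu> \<Otimes>\<^sub>M \<nu>) borel fst = \<mu>" .
  have "distr (\<mu> \<Otimes>\<^sub>M \<nu>) borel snd = distr (\<mu> \<Otimes>\<^sub>M \<nu>) \<nu> snd"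
    using assms(2) by (intro distr_cong) simp_all
  also have "\<dots> = \<nu>" using distr_pair_snd'[OF assms(3,4)] .
  finally have 2: "distr (\<mu> \<Otimes>\<^sub>M \<nu>) borel snd = \<nu>" .
  show ?thesis unfolding couplings_def using s 1 2 prob_space_pair[OF assms(3,4)] by auto
qed

lemma Tc_le:
  assumes "\<pi> \<in> couplings \<mu> \<nu>" "(\<integral>\<^sup>+ xy. ennreal (dist (fst xy) (snd xy) powr p) \<partial>\<pi>) < \<top>"
  shows "Tc p \<mu> \<nu> \<le> enn2real (\<integral>\<^sup>+ xy. ennreal (dist (fst xy) (snd xy) powr p) \<partial>\<pi>)"
  unfolding Tc_def using assms by (intro enn2real_mono INF_lower) auto

lemma return_ws:
  fixes x :: "'a::polish_space"
  shows "return borel x \<in> wasserstein_space p"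
  unfolding wasserstein_space_def
  by (auto intro!: prob_space_return exI[of _ x] simp: nn_integral_return)

lemma coupling_dirac_snd:
  fixes \<nu> :: "'a::polish_space measure"
  assumes pi: "\<pi> \<in> couplings \<nu> (return borel x)"
  shows "(\<integral>\<^sup>+ w. ennreal (dist (fst w) (snd w) powr p) \<partial>\<pi>) = (\<integral>\<^sup>+ y. ennreal (dist y x powr p) \<partial>\<nu>)"
proof -
  note D = couplingsD[OF pi]
  have ms: "snd \<in> measurable \<pi> borel" "fst \<in> measurable \<pi> borel"
    using D(1) by (auto intro!: meas_pi)
  have "emeasure \<pi> (snd -` (UNIV - {x}) \<inter> space \<pi>) = emeasure (distr \<pi> borel snd) (UNIV - {x})"
    using ms by (subst emeasure_distr) auto
  also have "\<dots> = 0" using D(4) by simp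
  finally have "AE w in \<pi>. snd w = x"
    using ms by (intro AE_I'[of "snd -` (UNIV - {x}) \<inter> space \<pi>"]) (auto intro!: measurable_sets[OF ms(1)])
  then have "(\<integral>\<^sup>+ w. ennreal (dist (fst w) (snd w) powr p) \<partial>\<pi>) = (\<integral>\<^sup>+ w. ennreal (dist (fst w) x powr p) \<partial>\<pi>)"
    by (intro nn_integral_cong_AE) auto
  also have "\<dots> = (\<integral>\<^sup>+ y. ennreal (dist y x powr p) \<partial>distr \<pi> borel fst)"
    using ms by (subst nn_integral_distr) auto
  finally show ?thesis using D(3) by simp
qed

lemma coupling_dirac_fst:
  fixes \<nu> :: "'a::polish_space measure"
  assumes pi: "\<pi> \<in> couplings (return borel x) \<nu>"
  shows "(\<integral>\<^sup>+ w. ennreal (dist (fst w) (snd w) powr p) \<partial>\<pi>) = (\<integral>\<^sup>+ y. ennreal (dist x y powr p) \<partial>\<nu>)"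
proof -
  note D = couplingsD[OF pi]
  have ms: "snd \<in> measurable \<pi> borel" "fst \<in> measurable \<pi> borel"
    using D(1) by (auto intro!: meas_pi)
  have "emeasure \<pi> (fst -` (UNIV - {x}) \<inter> space \<pi>) = emeasure (distr \<pi> borel fst) (UNIV - {x})"
    using ms by (subst emeasure_distr) auto
  also have "\<dots> = 0" using D(3) by simp
  finally have "AE w in \<pi>. fst w = x"
    using ms by (intro AE_I'[of "fst -` (UNIV - {x}) \<inter> space \<pi>"]) (auto intro!: measurable_sets[OF ms(2)])
  then have "(\<integral>\<^sup>+ w. ennreal (dist (fst w) (snd w) powr p) \<partial>\<pi>) = (\<integral>\<^sup>+ w. ennreal (dist x (snd w) powr p) \<partial>\<pi>)"
    by (intro nn_integral_cong_AE) auto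
  also have "\<dots> = (\<integral>\<^sup>+ y. ennreal (dist x y powr p) \<partial>distr \<pi> borel snd)"
    using ms by (subst nn_integral_distr) auto
  finally show ?thesis using D(4) by simp
qed

lemma Tc_dirac_snd:
  fixes \<nu> :: "'a::polish_space measure"
  assumes "\<nu> \<in> wasserstein_space p"
  shows "Tc p \<nu> (return borel x) = enn2real (\<integral>\<^sup>+ y. ennreal (dist y x powr p) \<partial>\<nu>)"
proof -
  have ne: "couplings \<nu> (return borel x) \<noteq> {}"
    using pair_coupling[of \<nu> "return borel x"] wsD[OF assms] wsD[OF return_ws[of x p]] by auto
  have "(INF \<pi>\<in>couplings \<nu> (return borel x). \<integral>\<^sup>+ xy. ennreal (dist (fst xy) (snd xy) powr p) \<partial>\<pi>) =
     (INF \<pi>\<in>couplings \<nu> (return borel x). \<integral>\<^sup>+ y. ennreal (dist y x powr p) \<partial>\<nu>)"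
    by (rule INF_cong) (auto simp: coupling_dirac_snd)
  then show ?thesis unfolding Tc_def using ne by simp
qed

lemma Tc_dirac_fst:
  fixes \<nu> :: "'a::polish_space measure"
  assumes "\<nu> \<in> wasserstein_space p"
  shows "Tc p (return borel x) \<nu> = enn2real (\<integral>\<^sup>+ y. ennreal (dist x y powr p) \<partial>\<nu>)"
proof -
  have ne: "couplings (return borel x) \<nu> \<noteq> {}"
    using pair_coupling[of "return borel x" \<nu>] wsD[OF assms] wsD[OF return_ws[of x p]] by auto
  have "(INF \<pi>\<in>couplings (return borel x) \<nu>. \<integral>\<^sup>+ xy. ennreal (dist (fst xy) (snd xy) powr p) \<partial>\<pi>) =
     (INF \<pi>\<in>couplings (return borel x) \<nu>. \<integral>\<^sup>+ y. ennreal (dist x y powr p) \<partial>\<nu>)"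
    by (rule INF_cong) (auto simp: coupling_dirac_fst)
  then show ?thesis unfolding Tc_def using ne by simp
qed

lemma dirac_eq:
  fixes \<nu> :: "'a::polish_space measure"
  assumes "\<nu> \<in> wasserstein_space p" "emeasure \<nu> {x} = 1"
  shows "\<nu> = return borel x"
proof (rule measure_eqI)
  interpret prob_space \<nu> using wsD[OF assms(1)] by simp
  have sp: "space \<nu> = UNIV" "sets \<nu> = sets borel" using wsD[OF assms(1)] by auto
  have e1: "emeasure \<nu> UNIV = 1" using emeasure_space_1 sp by simp
  show "sets \<nu> = sets (return borel x)" using sp by simp
  fix A assume A: "A \<in> sets \<nu>"
  show "emeasure \<nu> A = emeasure (return borel x) A"
  proof (cases "x \<in> A")
    case True
    then have "emeasure \<nu> {x} \<le> emeasure \<nu> A" using A by (intro emeasure_mono) auto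
    moreover have "emeasure \<nu> A \<le> 1" by (rule emeasure_le_1)
    ultimately show ?thesis using True A sp assms(2) by auto
  next
    case False
    have "emeasure \<nu> A \<le> emeasure \<nu> (space \<nu> - {x})" using A False sp by (intro emeasure_mono) auto
    also have "\<dots> = 0" using emeasure_compl[of "{x}" \<nu>] sp assms(2) e1 by simp
    finally show ?thesis using False A sp by simp
  qed
qed

lemma not_dirac_pos:
  fixes \<nu> :: "'a::polish_space measure"
  assumes "\<nu> \<in> wasserstein_space p" "\<nu> \<noteq> return borel x"
  shows "0 < emeasure \<nu> (UNIV - {x})"
proof (rule ccontr)
  interpret prob_space \<nu> using wsD[OF assms(1)] by simp
  have sp: "space \<nu> = UNIV" "sets \<nu> = sets borel" using wsD[OF assms(1)] by auto
  have e1: "emeasure \<nu> UNIV = 1" using emeasure_space_1 sp by simp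
  assume "\<not> 0 < emeasure \<nu> (UNIV - {x})"
  then have "emeasure \<nu> (UNIV - {x}) = 0" by (simp add: zero_less_iff_neq_zero)
  then have "emeasure \<nu> {x} = 1"
    using emeasure_compl[of "UNIV - {x}" \<nu>] sp e1 by (simp add: Diff_Diff_Int)
  then show False using dirac_eq[OF assms(1)] assms(2) by simp
qed

lemma pps:
  assumes "prob_space M1" "prob_space M2"
  shows "pair_prob_space M1 M2"
proof -
  interpret A: prob_space M1 by fact
  interpret B: prob_space M2 by fact
  show ?thesis by unfold_locales
qed

lemma meas_Q:
  fixes M1 M2 :: "'a::polish_space measure"
  assumes "sets M1 = sets borel" "sets M2 = sets borel" "f \<in> measurable (borel \<Otimes>\<^sub>M borel) N"
  shows "f \<in> measurable (M1 \<Otimes>\<^sub>M M2) N"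
proof -
  have "sets (M1 \<Otimes>\<^sub>M M2) = sets (borel \<Otimes>\<^sub>M borel)" by (rule sets_pair_measure_cong[OF assms(1,2)])
  then show ?thesis using assms(3) by (subst measurable_cong_sets[OF _ refl])
qed

lemma sets_Q:
  fixes M1 M2 :: "'a::polish_space measure"
  assumes "sets M1 = sets borel" "sets M2 = sets borel" "S \<in> sets (borel \<Otimes>\<^sub>M borel)"
  shows "S \<in> sets (M1 \<Otimes>\<^sub>M M2)"
  using sets_pair_measure_cong[OF assms(1,2)] assms(3) by simp

lemma ennreal_strict_aux:
  fixes a b c :: ennreal
  assumes "a + c \<le> b" "0 < c" "b < \<top>"
  shows "a < b"
  by (metis assms(1,2,3) diff_eq_0_iff_ennreal dual_order.strict_iff_order
    ennreal_add_diff_cancel_left le_iff_add order.strict_trans2)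

lemma enn2real_strict: fixes a b :: ennreal shows "a < b \<Longrightarrow> b < \<top> \<Longrightarrow> enn2real a < enn2real b"
  by simp

lemma nn_fst_Q:
  assumes "prob_space M1" "prob_space M2" "g \<in> borel_measurable M1"
  shows "(\<integral>\<^sup>+ w. g (fst w) \<partial>(M1 \<Otimes>\<^sub>M M2)) = (\<integral>\<^sup>+ y. g y \<partial>M1)"
proof -
  have "(\<integral>\<^sup>+ w. g (fst w) \<partial>(M1 \<Otimes>\<^sub>M M2)) = (\<integral>\<^sup>+ y. g y \<partial>distr (M1 \<Otimes>\<^sub>M M2) M1 fst)"
    using assms(3) by (subst nn_integral_distr) auto
  also have "distr (M1 \<Otimes>\<^sub>M M2) M1 fst = M1" using prob_space.distr_pair_fst[OF assms(2)] .
  finally show ?thesis .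
qed

lemma nn_snd_Q:
  assumes "prob_space M1" "prob_space M2" "g \<in> borel_measurable M2"
  shows "(\<integral>\<^sup>+ w. g (snd w) \<partial>(M1 \<Otimes>\<^sub>M M2)) = (\<integral>\<^sup>+ y. g y \<partial>M2)"
proof -
  have "(\<integral>\<^sup>+ w. g (snd w) \<partial>(M1 \<Otimes>\<^sub>M M2)) = (\<integral>\<^sup>+ y. g y \<partial>distr (M1 \<Otimes>\<^sub>M M2) M2 snd)"
    using assms(3) by (subst nn_integral_distr) auto
  also have "distr (M1 \<Otimes>\<^sub>M M2) M2 snd = M2" using distr_pair_snd'[OF assms(1,2)] .
  finally show ?thesis .
qed

lemma dirac_strict:
  fixes \<nu>1 \<nu>2 :: "'a::polish_space measure"
  assumes U: "ultrametric TYPE('a)" and p: "0 < p"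
    and n1: "\<nu>1 \<in> wasserstein_space p" and n2: "\<nu>2 \<in> wasserstein_space p"
    and d1: "\<nu>1 \<noteq> return borel x" and d2: "\<nu>2 \<noteq> return borel x"
  shows "Tc p \<nu>1 \<nu>2 < Tc p \<nu>1 (return borel x) + Tc p (return borel x) \<nu>2"
proof -
  note W1 = wsD[OF n1] and W2 = wsD[OF n2]
  interpret P: pair_prob_space \<nu>1 \<nu>2 using pps W1(2) W2(2) by blast
  let ?Q = "\<nu>1 \<Otimes>\<^sub>M \<nu>2"
  define S where "S w = ennreal (dist (fst w) (snd w) powr p)" for w :: "'a \<times> 'a"
  define a where "a w = ennreal (dist (fst w) x powr p)" for w :: "'a \<times> 'a"
  define b where "b w = ennreal (dist x (snd w) powr p)" for w :: "'a \<times> 'a"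
  define m where "m w = ennreal (min (dist (fst w) x powr p) (dist x (snd w) powr p))" for w :: "'a \<times> 'a"
  have r1: "(\<lambda>w. dist (fst w) x powr p) \<in> borel_measurable (borel \<Otimes>\<^sub>M borel)"
    using measurable_fst meas_dp by (rule measurable_compose)
  have r2: "(\<lambda>w. dist x (snd w) powr p) \<in> borel_measurable (borel \<Otimes>\<^sub>M borel)"
    using measurable_snd meas_dp2 by (rule measurable_compose)
  have r3: "(\<lambda>w. min (dist (fst w) x powr p) (dist x (snd w) powr p)) \<in> borel_measurable (borel \<Otimes>\<^sub>M borel)"
    using r2 r1 by (rule borel_measurable_min)
  have mS: "S \<in> borel_measurable ?Q" unfolding S_def
    by (rule meas_Q[OF W1(1) W2(1)], rule measurable_compose[OF meas_dp3]) simp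
  have ma: "a \<in> borel_measurable ?Q" unfolding a_def
    by (rule meas_Q[OF W1(1) W2(1)], rule measurable_compose[OF r1]) simp
  have mb: "b \<in> borel_measurable ?Q" unfolding b_def
    by (rule meas_Q[OF W1(1) W2(1)], rule measurable_compose[OF r2]) simp
  have mm: "m \<in> borel_measurable ?Q" unfolding m_def
    by (rule meas_Q[OF W1(1) W2(1)], rule measurable_compose[OF r3]) simp
  have pt: "S w + m w \<le> a w + b w" for w
  proof -
    have "dist (fst w) (snd w) powr p \<le> max (dist (fst w) x powr p) (dist x (snd w) powr p)"
      by (rule ultra_powr[OF U p])
    then have "dist (fst w) (snd w) powr p + min (dist (fst w) x powr p) (dist x (snd w) powr p)
       \<le> dist (fst w) x powr p + dist x (snd w) powr p" by linarith
    then show ?thesis unfolding S_def m_def a_def b_def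
      by (simp add: ennreal_plus[symmetric] del: ennreal_plus)
  qed
  have "(\<integral>\<^sup>+ w. S w \<partial>?Q) + (\<integral>\<^sup>+ w. m w \<partial>?Q) = (\<integral>\<^sup>+ w. S w + m w \<partial>?Q)"
    using mS mm by (simp add: nn_integral_add)
  also have "\<dots> \<le> (\<integral>\<^sup>+ w. a w + b w \<partial>?Q)" by (intro nn_integral_mono pt)
  also have "\<dots> = (\<integral>\<^sup>+ w. a w \<partial>?Q) + (\<integral>\<^sup>+ w. b w \<partial>?Q)"
    using ma mb by (simp add: nn_integral_add)
  also have "(\<integral>\<^sup>+ w. a w \<partial>?Q) = (\<integral>\<^sup>+ y. ennreal (dist y x powr p) \<partial>\<nu>1)"
    unfolding a_def using W1 W2 by (intro nn_fst_Q) (auto simp: measurable_cong_sets[OF W1(1) refl])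
  also have "(\<integral>\<^sup>+ w. b w \<partial>?Q) = (\<integral>\<^sup>+ y. ennreal (dist x y powr p) \<partial>\<nu>2)"
    unfolding b_def using W1 W2 by (intro nn_snd_Q) (auto simp: measurable_cong_sets[OF W2(1) refl])
  finally have ineq: "(\<integral>\<^sup>+ w. S w \<partial>?Q) + (\<integral>\<^sup>+ w. m w \<partial>?Q)
      \<le> (\<integral>\<^sup>+ y. ennreal (dist y x powr p) \<partial>\<nu>1) + (\<integral>\<^sup>+ y. ennreal (dist x y powr p) \<partial>\<nu>2)" .
  have A0: "(\<integral>\<^sup>+ y. ennreal (dist y x powr p) \<partial>\<nu>1) < \<top>" by (rule ws_moment[OF U p n1])
  have B0: "(\<integral>\<^sup>+ y. ennreal (dist x y powr p) \<partial>\<nu>2) < \<top>" by (rule ws_moment'[OF U p n2])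
  define E where "E = (UNIV - {x}) \<times> (UNIV - {x})"
  have Esets: "E \<in> sets ?Q" unfolding E_def using W1 W2 by (intro pair_measureI) auto
  have "emeasure ?Q E = emeasure \<nu>1 (UNIV - {x}) * emeasure \<nu>2 (UNIV - {x})"
    unfolding E_def using W2 W1 by (subst P.M2.emeasure_pair_measure_Times) auto
  also have "\<dots> > 0" using not_dirac_pos[OF n1 d1] not_dirac_pos[OF n2 d2]
    by (simp add: ennreal_zero_less_mult_iff)
  finally have Epos: "0 < emeasure ?Q E" .
  have mpos: "0 < (\<integral>\<^sup>+ w. m w \<partial>?Q)"
  proof (rule ccontr)
    assume "\<not> 0 < (\<integral>\<^sup>+ w. m w \<partial>?Q)"
    then have "(\<integral>\<^sup>+ w. m w \<partial>?Q) = 0" by (simp add: zero_less_iff_neq_zero)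
    then have "AE w in ?Q. m w = 0" using mm by (simp add: nn_integral_0_iff_AE)
    moreover have "m w \<noteq> 0" if "w \<in> E" for w
    proof -
      have h: "0 < dist (fst w) x powr p" "0 < dist x (snd w) powr p" using that unfolding E_def by auto
      have "0 < min (dist (fst w) x powr p) (dist x (snd w) powr p)" using h by (metis min_def)
      then show ?thesis unfolding m_def by (metis ennreal_eq_0_iff not_le)
    qed
    ultimately have "AE w in ?Q. w \<notin> E" by (auto elim: AE_mp)
    moreover have "{w \<in> space ?Q. \<not> w \<notin> E} = E" using Esets sets.sets_into_space by blast
    ultimately have "emeasure ?Q E = 0" using AE_iff_measurable[OF Esets, of "\<lambda>w. w \<notin> E"] by simp
    then show False using Epos by simp
  qed
  have Slt: "(\<integral>\<^sup>+ w. S w \<partial>?Q) < (\<integral>\<^sup>+ y. ennreal (dist y x powr p) \<partial>\<nu>1) + (\<integral>\<^sup>+ y. ennreal (dist x y powr p) \<partial>\<nu>2)"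
    by (rule ennreal_strict_aux[OF ineq mpos]) (use A0 B0 in simp)
  have cpl: "?Q \<in> couplings \<nu>1 \<nu>2" by (rule pair_coupling) (use W1 W2 in auto)
  have fin: "(\<integral>\<^sup>+ y. ennreal (dist y x powr p) \<partial>\<nu>1) + (\<integral>\<^sup>+ y. ennreal (dist x y powr p) \<partial>\<nu>2) < \<top>"
    using A0 B0 by simp
  have Sfin: "(\<integral>\<^sup>+ w. S w \<partial>?Q) < \<top>" using Slt fin by (rule order.strict_trans)
  have "Tc p \<nu>1 \<nu>2 \<le> enn2real (\<integral>\<^sup>+ w. S w \<partial>?Q)"
    unfolding S_def by (rule Tc_le[OF cpl Sfin[unfolded S_def]])
  also have "\<dots> < enn2real ((\<integral>\<^sup>+ y. ennreal (dist y x powr p) \<partial>\<nu>1) + (\<integral>\<^sup>+ y. ennreal (dist x y powr p) \<partial>\<nu>2))"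
    using Slt fin by (rule enn2real_strict)
  also have "\<dots> = Tc p \<nu>1 (return borel x) + Tc p (return borel x) \<nu>2"
    unfolding Tc_dirac_snd[OF n1] Tc_dirac_fst[OF n2] using A0 B0 by (rule enn2real_plus)
  finally show ?thesis .
qed

lemma ball_ultra:
  assumes U: "ultrametric TYPE('a::metric_space)"
    and z: "(z::'a) \<in> cball x r" and w: "w \<notin> cball x r"
  shows "dist z w = dist x w"
proof -
  have zx: "dist x z \<le> r" using z by simp
  have wx: "r < dist x w" using w by simp
  have "dist x w \<le> max (dist x z) (dist z w)" by (rule ultra_dist[OF U])
  then have 1: "dist x w \<le> dist z w" using zx wx by (auto simp: max_def split: if_splits)
  have "dist z w \<le> max (dist z x) (dist x w)" by (rule ultra_dist[OF U])
  then have 2: "dist z w \<le> dist x w" using zx wx by (auto simp: max_def dist_commute split: if_splits)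
  show ?thesis using 1 2 by simp
qed

lemma small_le_zero:
  fixes t :: real
  assumes "\<And>n. t \<le> 2 / real (Suc n)"
  shows "t \<le> 0"
proof (rule ccontr)
  assume "\<not> t \<le> 0"
  then have t: "0 < t" by simp
  obtain n where n: "2 / t < real n" using reals_Archimedean2 by blast
  then have "2 / t < real (Suc n)" by simp
  then have "2 < t * real (Suc n)" using t by (simp add: field_simps)
  then have "2 / real (Suc n) < t" by (simp add: field_simps)
  then show False using assms[of n] by simp
qed

lemma exists_ball:
  fixes \<mu> :: "'a::polish_space measure"
  assumes mu: "\<mu> \<in> wasserstein_space p" and nd: "\<And>x. \<mu> \<noteq> return borel x"
  shows "\<exists>x r. 0 < emeasure \<mu> (cball x r) \<and> emeasure \<mu> (cball x r) < 1"
proof (rule ccontr)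
  assume H: "\<not> ?thesis"
  interpret prob_space \<mu> using wsD[OF mu] by simp
  have sp: "space \<mu> = UNIV" "sets \<mu> = sets borel" using wsD[OF mu] by auto
  have e1: "emeasure \<mu> UNIV = 1" using emeasure_space_1 sp by simp
  have cb_sets: "cball x r \<in> sets \<mu>" for x r using sp by simp
  have H01: "emeasure \<mu> (cball x r) = 0 \<or> emeasure \<mu> (cball x r) = 1" for x r
  proof -
    have "emeasure \<mu> (cball x r) \<le> 1" by (rule emeasure_le_1)
    then show ?thesis using H by (metis not_gr_zero order_less_le)
  qed
  obtain D :: "'a set" where D: "countable D" "\<And>X. open X \<Longrightarrow> X \<noteq> {} \<Longrightarrow> \<exists>d\<in>D. d \<in> X"
    by (rule countable_dense_setE) blast
  have Dne: "D \<noteq> {}" using D(2)[of UNIV] by auto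
  define d where "d = from_nat_into D"
  have cover: "\<exists>k. dist z (d k) \<le> e" if e: "0 < e" for z e
  proof -
    obtain y where y: "y \<in> D" "y \<in> ball z e" using D(2)[of "ball z e"] e by auto
    obtain k where "d k = y" using from_nat_into_surj[OF D(1) y(1)] d_def by blast
    then show ?thesis using y(2) by (auto intro!: exI[of _ k])
  qed
  have one: "\<exists>k. emeasure \<mu> (cball (d k) (1 / real (Suc n))) = 1" for n
  proof (rule ccontr)
    assume "\<not> ?thesis"
    then have z: "emeasure \<mu> (cball (d k) (1 / real (Suc n))) = 0" for k using H01 by blast
    have U: "UNIV = (\<Union>k. cball (d k) (1 / real (Suc n)))"
      using cover[of "1 / real (Suc n)"] by (auto simp: dist_commute)
    have rs: "range (\<lambda>k. cball (d k) (1 / real (Suc n))) \<subseteq> sets \<mu>" using cb_sets by auto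
    have "emeasure \<mu> UNIV \<le> (\<Sum>k. emeasure \<mu> (cball (d k) (1 / real (Suc n))))"
      using emeasure_subadditive_countably[OF rs] by (subst U) simp
    also have "\<dots> = 0" using z by simp
    finally show False using e1 by simp
  qed
  define c where "c n = d (SOME k. emeasure \<mu> (cball (d k) (1 / real (Suc n))) = 1)" for n
  have c: "emeasure \<mu> (cball (c n) (1 / real (Suc n))) = 1" for n
    unfolding c_def by (rule someI_ex[OF one])
  have "AE y in \<mu>. y \<in> cball (c n) (1 / real (Suc n))" for n
  proof (rule AE_I')
    show "UNIV - cball (c n) (1 / real (Suc n)) \<in> null_sets \<mu>"
      using emeasure_compl[of "cball (c n) (1 / real (Suc n))" \<mu>] c[of n] sp e1 by (auto simp: null_sets_def)
    show "{y \<in> space \<mu>. y \<notin> cball (c n) (1 / real (Suc n))} \<subseteq> UNIV - cball (c n) (1 / real (Suc n))" by auto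
  qed
  then have AEall: "AE y in \<mu>. \<forall>n. y \<in> cball (c n) (1 / real (Suc n))"
    by (simp add: AE_all_countable)
  have "\<exists>z. \<forall>n. z \<in> cball (c n) (1 / real (Suc n))"
  proof (rule ccontr)
    assume nz: "\<not> ?thesis"
    have "AE y in \<mu>. False" using AEall
    proof (rule AE_mp)
      show "AE y in \<mu>. (\<forall>n. y \<in> cball (c n) (1 / real (Suc n))) \<longrightarrow> False"
        using nz by (intro AE_I2) blast
    qed
    then show False by (simp add: AE_False)
  qed
  then obtain z where z: "\<forall>n. z \<in> cball (c n) (1 / real (Suc n))" by blast
  have "AE y in \<mu>. y = z"
    using AEall
  proof (rule AE_mp, intro AE_I2 impI)
    fix y assume y: "\<forall>n. y \<in> cball (c n) (1 / real (Suc n))"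
    have "dist y z \<le> 2 / real (Suc n)" for n
    proof -
      have "dist y z \<le> dist y (c n) + dist (c n) z" by (rule dist_triangle)
      also have "\<dots> \<le> 1 / real (Suc n) + 1 / real (Suc n)"
        using y z by (intro add_mono) (auto simp: dist_commute)
      finally show ?thesis by simp
    qed
    then have "dist y z \<le> 0" by (rule small_le_zero)
    then show "y = z" by simp
  qed
  moreover have "{y \<in> space \<mu>. \<not> y = z} = UNIV - {z}" using sp by blast
  moreover have "UNIV - {z} \<in> sets \<mu>" using sp by simp
  ultimately have "emeasure \<mu> (UNIV - {z}) = 0"
    using AE_iff_measurable[of "UNIV - {z}" \<mu> "\<lambda>y. y = z"] by simp
  then have "emeasure \<mu> {z} = 1"
    using emeasure_compl[of "UNIV - {z}" \<mu>] sp e1 by (simp add: Diff_Diff_Int)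
  then show False using dirac_eq[OF mu] nd by blast
qed

lemma uniform_ws:
  fixes \<mu> :: "'a::polish_space measure"
  assumes U: "ultrametric TYPE('a)" and p: "0 < p" and mu: "\<mu> \<in> wasserstein_space p"
    and S: "S \<in> sets borel" and ne: "emeasure \<mu> S \<noteq> 0"
  shows "uniform_measure \<mu> S \<in> wasserstein_space p"
proof -
  interpret prob_space \<mu> using wsD[OF mu] by simp
  have sp: "space \<mu> = UNIV" "sets \<mu> = sets borel" using wsD[OF mu] by auto
  have Sm: "S \<in> sets \<mu>" using S sp by simp
  have fin: "emeasure \<mu> S \<noteq> \<infinity>" by (simp add: emeasure_eq_measure)
  fix x0 :: 'a
  have mf: "(\<lambda>y. ennreal (dist y x0 powr p)) \<in> borel_measurable \<mu>"
    using measurable_compose[OF meas_dp[of x0 p], of ennreal] sp by (simp add: measurable_cong_sets[OF sp(2) refl])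
  have "(\<integral>\<^sup>+ y. ennreal (dist y x0 powr p) \<partial>uniform_measure \<mu> S) =
      (\<integral>\<^sup>+ y. ennreal (dist y x0 powr p) * indicator S y \<partial>\<mu>) / emeasure \<mu> S"
    by (rule nn_integral_uniform_measure[OF mf Sm])
  also have "\<dots> < \<top>"
  proof -
    have "(\<integral>\<^sup>+ y. ennreal (dist y x0 powr p) * indicator S y \<partial>\<mu>) \<le> (\<integral>\<^sup>+ y. ennreal (dist y x0 powr p) \<partial>\<mu>)"
      by (intro nn_integral_mono) (auto split: split_indicator)
    also have "\<dots> < \<top>" by (rule ws_moment[OF U p mu])
    finally have "(\<integral>\<^sup>+ y. ennreal (dist y x0 powr p) * indicator S y \<partial>\<mu>) < \<top>" .
    then show ?thesis using ne by (subst less_top[symmetric]) (auto simp: ennreal_divide_eq_top_iff)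
  qed
  finally have mom: "(\<integral>\<^sup>+ y. ennreal (dist y x0 powr p) \<partial>uniform_measure \<mu> S) < \<infinity>" by simp
  show ?thesis unfolding wasserstein_space_def
    using sp mom prob_space_uniform_measure[OF ne fin] by auto
qed

lemma mdp2e: "(\<lambda>y. ennreal (dist x y powr p)) \<in> borel_measurable (borel :: 'a::polish_space measure)"
  using meas_dp2 by (rule measurable_compose) simp

lemma mdpe: "(\<lambda>y. ennreal (dist y x powr p)) \<in> borel_measurable (borel :: 'a::polish_space measure)"
  using meas_dp by (rule measurable_compose) simp

lemma mdp3e: "(\<lambda>w. ennreal (dist (fst w) (snd w) powr p)) \<in> borel_measurable (borel :: ('a::polish_space \<times> 'a) measure)"
proof -
  have "(\<lambda>w. ennreal (dist (fst w) (snd w) powr p)) \<in> borel_measurable (borel \<Otimes>\<^sub>M borel :: ('a \<times> 'a) measure)"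
    using meas_dp3 by (rule measurable_compose) simp
  then show ?thesis by (simp add: borel_prod)
qed

lemma meas_sets:
  assumes "sets M = sets N" "f \<in> measurable N K"
  shows "f \<in> measurable M K"
  using assms by (subst measurable_cong_sets[OF assms(1) refl])

locale betw =
  fixes p :: real and \<mu> :: "'a::polish_space measure" and x :: 'a and r :: real
  assumes U: "ultrametric TYPE('a)" and p: "0 < p" and mu: "\<mu> \<in> wasserstein_space p"
    and pos: "0 < emeasure \<mu> (cball x r)" and lt1: "emeasure \<mu> (cball x r) < 1"
begin

definition "A = cball x r"
definition "B = UNIV - A"
definition "\<nu>1 = uniform_measure \<mu> A"
definition "\<nu>2 = uniform_measure \<mu> B"
definition "a = measure \<mu> A"

lemma sp: "space \<mu> = UNIV" "sets \<mu> = sets borel" "prob_space \<mu>"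
  using wsD[OF mu] by auto

sublocale M: prob_space \<mu> by (rule sp(3))

lemma A_sets: "A \<in> sets \<mu>" "A \<in> sets borel" unfolding A_def using sp by auto
lemma B_sets: "B \<in> sets \<mu>" "B \<in> sets borel"
  unfolding B_def using sets.compl_sets[OF A_sets(1)] sets.compl_sets[OF A_sets(2)] sp by auto

lemma eA: "emeasure \<mu> A = ennreal a" unfolding a_def by (simp add: M.emeasure_eq_measure)
lemma a01: "0 < a" "a < 1"
  using pos lt1 eA unfolding A_def by (auto simp: ennreal_less_iff)

lemma eB: "emeasure \<mu> B = ennreal (1 - a)"
proof -
  have "emeasure \<mu> B = emeasure \<mu> (space \<mu>) - emeasure \<mu> A"
    unfolding B_def using emeasure_compl[OF A_sets(1)] sp by simp
  also have "\<dots> = ennreal 1 - ennreal a" using eA M.emeasure_space_1 by simp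
  also have "\<dots> = ennreal (1 - a)" using a01 by (subst ennreal_minus) auto
  finally show ?thesis .
qed

lemma AB: "A \<inter> B = {}" "A \<union> B = UNIV" unfolding B_def by auto

lemma n1: "emeasure \<nu>1 S = emeasure \<mu> (A \<inter> S) / ennreal a" if "S \<in> sets borel" for S
  unfolding \<nu>1_def using that A_sets sp eA by (subst emeasure_uniform_measure) auto

lemma n2: "emeasure \<nu>2 S = emeasure \<mu> (B \<inter> S) / ennreal (1 - a)" if "S \<in> sets borel" for S
  unfolding \<nu>2_def using that B_sets sp eB by (subst emeasure_uniform_measure) auto

lemma n1W: "\<nu>1 \<in> wasserstein_space p"
  unfolding \<nu>1_def using a01 eA by (intro uniform_ws[OF U p mu A_sets(2)]) auto

lemma n2W: "\<nu>2 \<in> wasserstein_space p"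
  unfolding \<nu>2_def using a01 eB by (intro uniform_ws[OF U p mu B_sets(2)]) auto

lemma n1B: "emeasure \<nu>1 B = 0" using n1[OF B_sets(2)] AB by simp
lemma n2A: "emeasure \<nu>2 A = 0" using n2[OF A_sets(2)] AB by (simp add: Int_commute)

lemma ne1: "\<nu>1 \<noteq> \<mu>"
proof
  assume "\<nu>1 = \<mu>"
  moreover have "emeasure \<nu>1 A = 1" unfolding \<nu>1_def using eA a01
    by (intro emeasure_uniform_measure_1) auto
  ultimately show False using eA a01 by (simp add: ennreal_eq_1)
qed

lemma ne2: "\<nu>2 \<noteq> \<mu>"
proof
  assume "\<nu>2 = \<mu>"
  then show False using n2A eA a01 by simp
qed

definition "C = (\<integral>\<^sup>+ y. ennreal (dist x y powr p) \<partial>\<nu>2)"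
definition "I = (\<integral>\<^sup>+ y. ennreal (dist x y powr p) * indicator B y \<partial>\<mu>)"

lemma mf_x: "(\<lambda>y. ennreal (dist x y powr p)) \<in> borel_measurable \<mu>"
  using measurable_compose[OF meas_dp2[of x p], of ennreal] by (simp add: measurable_cong_sets[OF sp(2) refl])

lemma C_I: "C = I / ennreal (1 - a)"
  unfolding C_def I_def \<nu>2_def eB[symmetric] by (rule nn_integral_uniform_measure[OF mf_x B_sets(1)])

lemma I_fin: "I < \<top>"
proof -
  have "I \<le> (\<integral>\<^sup>+ y. ennreal (dist x y powr p) \<partial>\<mu>)"
    unfolding I_def by (intro nn_integral_mono) (auto split: split_indicator)
  also have "\<dots> < \<top>" by (rule ws_moment'[OF U p mu])
  finally show ?thesis .
qed

definition "i = enn2real I"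
lemma I_i: "I = ennreal i" "0 \<le> i" unfolding i_def using I_fin by auto
lemma C_i: "C = ennreal (i / (1 - a))" "enn2real C = i / (1 - a)"
  using C_I I_i a01 by (auto simp: divide_ennreal)

lemma Tc12: "Tc p \<nu>1 \<nu>2 = enn2real C"
proof -
  have cpl: "(\<integral>\<^sup>+ w. ennreal (dist (fst w) (snd w) powr p) \<partial>\<pi>) = C" if pi: "\<pi> \<in> couplings \<nu>1 \<nu>2" for \<pi>
  proof -
    note D = couplingsD[OF pi]
    have ms: "snd \<in> measurable \<pi> borel" "fst \<in> measurable \<pi> borel"
      using D(1) by (auto intro!: meas_pi)
    have N1: "fst -` B \<inter> space \<pi> \<in> sets \<pi>" by (rule measurable_sets[OF ms(2) B_sets(2)])
    have N2: "snd -` A \<inter> space \<pi> \<in> sets \<pi>" by (rule measurable_sets[OF ms(1) A_sets(2)])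
    have "emeasure \<pi> (fst -` B \<inter> space \<pi>) = emeasure (distr \<pi> borel fst) B"
      by (rule emeasure_distr[symmetric, OF ms(2) B_sets(2)])
    also have "\<dots> = 0" using D(3) n1B by simp
    finally have ae1: "AE w in \<pi>. fst w \<in> A"
      by (intro AE_I'[of "fst -` B \<inter> space \<pi>"]) (use N1 in \<open>auto simp: B_def\<close>)
    have "emeasure \<pi> (snd -` A \<inter> space \<pi>) = emeasure (distr \<pi> borel snd) A"
      by (rule emeasure_distr[symmetric, OF ms(1) A_sets(2)])
    also have "\<dots> = 0" using D(4) n2A by simp
    finally have ae2: "AE w in \<pi>. snd w \<notin> A"
      by (intro AE_I'[of "snd -` A \<inter> space \<pi>"]) (use N2 in auto)
    have ae3: "AE w in \<pi>. fst w \<in> A \<and> snd w \<notin> A" using ae1 ae2 by (simp add: AE_conj_iff)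
    have eq: "fst w \<in> A \<and> snd w \<notin> A \<longrightarrow> ennreal (dist (fst w) (snd w) powr p) = ennreal (dist x (snd w) powr p)" for w
      using ball_ultra[OF U, of "fst w" x r "snd w"] unfolding A_def by simp
    have "AE w in \<pi>. ennreal (dist (fst w) (snd w) powr p) = ennreal (dist x (snd w) powr p)"
      using ae3 by (rule AE_mp) (rule AE_I2, rule eq)
    then have "(\<integral>\<^sup>+ w. ennreal (dist (fst w) (snd w) powr p) \<partial>\<pi>) = (\<integral>\<^sup>+ w. ennreal (dist x (snd w) powr p) \<partial>\<pi>)"
      by (rule nn_integral_cong_AE)
    also have "\<dots> = (\<integral>\<^sup>+ y. ennreal (dist x y powr p) \<partial>distr \<pi> borel snd)"
      by (rule nn_integral_distr[symmetric, OF ms(1)]) (simp add: mdp2e)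
    finally show ?thesis using D(4) C_def by simp
  qed
  have ne: "couplings \<nu>1 \<nu>2 \<noteq> {}"
    using pair_coupling[of \<nu>1 \<nu>2] wsD[OF n1W] wsD[OF n2W] by auto
  have "(INF \<pi>\<in>couplings \<nu>1 \<nu>2. \<integral>\<^sup>+ xy. ennreal (dist (fst xy) (snd xy) powr p) \<partial>\<pi>) =
     (INF \<pi>\<in>couplings \<nu>1 \<nu>2. C)"
    by (rule INF_cong) (auto simp: cpl)
  then show ?thesis unfolding Tc_def using ne by simp
qed

end

context betw begin

definition "g1 = (\<lambda>w::'a \<times> 'a. if w \<in> UNIV \<times> A then (snd w, snd w) else w)"
definition "g2 = (\<lambda>w::'a \<times> 'a. if w \<in> B \<times> UNIV then (fst w, fst w) else w)"
definition "Q1 = \<nu>1 \<Otimes>\<^sub>M \<mu>"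
definition "Q2 = \<mu> \<Otimes>\<^sub>M \<nu>2"
definition "\<pi>1 = distr Q1 borel g1"
definition "\<pi>2 = distr Q2 borel g2"

lemma W1: "sets \<nu>1 = sets borel" "prob_space \<nu>1" "space \<nu>1 = UNIV" using wsD[OF n1W] by auto
lemma W2: "sets \<nu>2 = sets borel" "prob_space \<nu>2" "space \<nu>2 = UNIV" using wsD[OF n2W] by auto

sublocale N1: prob_space \<nu>1 by (rule W1(2))
sublocale N2: prob_space \<nu>2 by (rule W2(2))

lemma sQ1: "sets Q1 = sets (borel \<Otimes>\<^sub>M borel)" unfolding Q1_def by (rule sets_pair_measure_cong[OF W1(1) sp(2)])
lemma sQ2: "sets Q2 = sets (borel \<Otimes>\<^sub>M borel)" unfolding Q2_def by (rule sets_pair_measure_cong[OF sp(2) W2(1)])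
lemma spQ1: "space Q1 = UNIV" unfolding Q1_def by (simp add: space_pair_measure W1 sp)
lemma spQ2: "space Q2 = UNIV" unfolding Q2_def by (simp add: space_pair_measure W2 sp)
lemma pQ1: "prob_space Q1" unfolding Q1_def by (rule prob_space_pair[OF W1(2) sp(3)])
lemma pQ2: "prob_space Q2" unfolding Q2_def by (rule prob_space_pair[OF sp(3) W2(2)])

lemma g1m: "g1 \<in> measurable Q1 borel"
proof -
  have "g1 \<in> measurable (borel \<Otimes>\<^sub>M borel) (borel \<Otimes>\<^sub>M borel)"
    unfolding g1_def
  proof (rule measurable_If_set)
    show "(\<lambda>w. (snd w, snd w)) \<in> measurable (borel \<Otimes>\<^sub>M borel) (borel \<Otimes>\<^sub>M borel :: ('a \<times> 'a) measure)"
      by (intro measurable_Pair measurable_snd)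
    show "(\<lambda>w. w) \<in> measurable (borel \<Otimes>\<^sub>M borel) (borel \<Otimes>\<^sub>M borel :: ('a \<times> 'a) measure)"
      by (rule measurable_ident_sets) simp
    show "(UNIV \<times> A) \<inter> space (borel \<Otimes>\<^sub>M borel) \<in> sets (borel \<Otimes>\<^sub>M borel :: ('a \<times> 'a) measure)"
      using A_sets(2) by (simp add: space_pair_measure)
  qed
  then show ?thesis using sQ1 sets_borel_pair[where 'a='a]
    by (subst measurable_cong_sets[OF sQ1 sets_borel_pair[symmetric]])
qed

lemma g2m: "g2 \<in> measurable Q2 borel"
proof -
  have "g2 \<in> measurable (borel \<Otimes>\<^sub>M borel) (borel \<Otimes>\<^sub>M borel)"
    unfolding g2_def
  proof (rule measurable_If_set)
    show "(\<lambda>w. (fst w, fst w)) \<in> measurable (borel \<Otimes>\<^sub>M borel) (borel \<Otimes>\<^sub>M borel :: ('a \<times> 'a) measure)"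
      by (intro measurable_Pair measurable_fst)
    show "(\<lambda>w. w) \<in> measurable (borel \<Otimes>\<^sub>M borel) (borel \<Otimes>\<^sub>M borel :: ('a \<times> 'a) measure)"
      by (rule measurable_ident_sets) simp
    show "(B \<times> UNIV) \<inter> space (borel \<Otimes>\<^sub>M borel) \<in> sets (borel \<Otimes>\<^sub>M borel :: ('a \<times> 'a) measure)"
      using B_sets(2) by (simp add: space_pair_measure)
  qed
  then show ?thesis
    by (subst measurable_cong_sets[OF sQ2 sets_borel_pair[symmetric]])
qed

lemma fst_b: "fst \<in> measurable (borel :: ('a \<times> 'a) measure) borel"
  by (rule meas_pi) auto
lemma snd_b: "snd \<in> measurable (borel :: ('a \<times> 'a) measure) borel"
  by (rule meas_pi) auto

lemma pi1_marg1: "distr \<pi>1 borel fst = \<nu>1"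
proof -
  have "distr \<pi>1 borel fst = distr Q1 borel (fst \<circ> g1)"
    unfolding \<pi>1_def by (rule distr_distr[OF fst_b g1m])
  also have "\<dots> = \<nu>1"
  proof (rule measure_eqI)
    show "sets (distr Q1 borel (fst \<circ> g1)) = sets \<nu>1" using W1 by simp
    fix S assume "S \<in> sets (distr Q1 borel (fst \<circ> g1))"
    then have S: "S \<in> sets borel" by simp
    have m: "fst \<circ> g1 \<in> measurable Q1 borel" using fst_b g1m by (rule measurable_comp[rotated])
    have "emeasure (distr Q1 borel (fst \<circ> g1)) S = emeasure Q1 ((fst \<circ> g1) -` S \<inter> space Q1)"
      by (rule emeasure_distr[OF m S])
    also have "(fst \<circ> g1) -` S \<inter> space Q1 = (UNIV \<times> (A \<inter> S)) \<union> (S \<times> B)"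
      unfolding spQ1 g1_def B_def by (auto split: if_splits)
    also have "emeasure Q1 ((UNIV \<times> (A \<inter> S)) \<union> (S \<times> B)) = emeasure Q1 (UNIV \<times> (A \<inter> S)) + emeasure Q1 (S \<times> B)"
      using S A_sets B_sets W1 sp unfolding Q1_def
      by (intro plus_emeasure[symmetric]) (auto simp: B_def)
    also have "emeasure Q1 (UNIV \<times> (A \<inter> S)) = emeasure \<nu>1 UNIV * emeasure \<mu> (A \<inter> S)"
      unfolding Q1_def using S A_sets W1 sp by (subst M.emeasure_pair_measure_Times) auto
    also have "emeasure Q1 (S \<times> B) = emeasure \<nu>1 S * emeasure \<mu> B"
      unfolding Q1_def using S B_sets W1 sp by (subst M.emeasure_pair_measure_Times) auto
    also have "emeasure \<nu>1 UNIV = 1" using N1.emeasure_space_1 W1 by simp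
    finally have eq: "emeasure (distr Q1 borel (fst \<circ> g1)) S = emeasure \<mu> (A \<inter> S) + emeasure \<nu>1 S * emeasure \<mu> B" by (simp add: comp_def)
    define s where "s = measure \<mu> (A \<inter> S)"
    have es: "emeasure \<mu> (A \<inter> S) = ennreal s" "0 \<le> s" unfolding s_def by (auto simp: M.emeasure_eq_measure)
    have n1S: "emeasure \<nu>1 S = ennreal (s / a)" using n1[OF S] es a01 by (simp add: divide_ennreal)
    have "emeasure (distr Q1 borel (fst \<circ> g1)) S = ennreal (s + s / a * (1 - a))"
      using eq es n1S eB a01 by (simp add: ennreal_mult[symmetric] ennreal_plus[symmetric] del: ennreal_plus)
    also have "s + s / a * (1 - a) = s / a" using a01 by (simp add: field_simps)
    finally show "emeasure (distr Q1 borel (fst \<circ> g1)) S = emeasure \<nu>1 S" using n1S by (simp add: comp_def)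
  qed
  finally show ?thesis .
qed

lemma pi1_marg2: "distr \<pi>1 borel snd = \<mu>"
proof -
  have "distr \<pi>1 borel snd = distr Q1 borel (snd \<circ> g1)"
    unfolding \<pi>1_def by (rule distr_distr[OF snd_b g1m])
  also have "snd \<circ> g1 = snd" unfolding g1_def by (auto simp: fun_eq_iff)
  also have "distr Q1 borel snd = distr Q1 \<mu> snd" using sp by (intro distr_cong) simp_all
  also have "\<dots> = \<mu>" unfolding Q1_def by (rule distr_pair_snd'[OF W1(2) sp(3)])
  finally show ?thesis .
qed

lemma pi2_marg1: "distr \<pi>2 borel fst = \<mu>"
proof -
  have "distr \<pi>2 borel fst = distr Q2 borel (fst \<circ> g2)"
    unfolding \<pi>2_def by (rule distr_distr[OF fst_b g2m])
  also have "fst \<circ> g2 = fst" unfolding g2_def by (auto simp: fun_eq_iff)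
  also have "distr Q2 borel fst = distr Q2 \<mu> fst" using sp by (intro distr_cong) simp_all
  also have "\<dots> = \<mu>" unfolding Q2_def by (rule N2.distr_pair_fst)
  finally show ?thesis .
qed

lemma pi2_marg2: "distr \<pi>2 borel snd = \<nu>2"
proof -
  have "distr \<pi>2 borel snd = distr Q2 borel (snd \<circ> g2)"
    unfolding \<pi>2_def by (rule distr_distr[OF snd_b g2m])
  also have "\<dots> = \<nu>2"
  proof (rule measure_eqI)
    show "sets (distr Q2 borel (snd \<circ> g2)) = sets \<nu>2" using W2 by simp
    fix S assume "S \<in> sets (distr Q2 borel (snd \<circ> g2))"
    then have S: "S \<in> sets borel" by simp
    have m: "snd \<circ> g2 \<in> measurable Q2 borel" using snd_b g2m by (rule measurable_comp[rotated])
    have "emeasure (distr Q2 borel (snd \<circ> g2)) S = emeasure Q2 ((snd \<circ> g2) -` S \<inter> space Q2)"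
      by (rule emeasure_distr[OF m S])
    also have "(snd \<circ> g2) -` S \<inter> space Q2 = (A \<times> S) \<union> ((B \<inter> S) \<times> UNIV)"
      unfolding spQ2 g2_def B_def by (auto split: if_splits)
    also have "emeasure Q2 ((A \<times> S) \<union> ((B \<inter> S) \<times> UNIV)) = emeasure Q2 (A \<times> S) + emeasure Q2 ((B \<inter> S) \<times> UNIV)"
      using S A_sets B_sets W2 sp unfolding Q2_def
      by (intro plus_emeasure[symmetric]) (auto simp: B_def)
    also have "emeasure Q2 (A \<times> S) = emeasure \<mu> A * emeasure \<nu>2 S"
      unfolding Q2_def using S A_sets W2 sp by (subst N2.emeasure_pair_measure_Times) auto
    also have "emeasure Q2 ((B \<inter> S) \<times> UNIV) = emeasure \<mu> (B \<inter> S) * emeasure \<nu>2 UNIV"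
      unfolding Q2_def using S B_sets W2 sp by (subst N2.emeasure_pair_measure_Times) auto
    also have "emeasure \<nu>2 UNIV = 1" using N2.emeasure_space_1 W2 by simp
    finally have eq: "emeasure (distr Q2 borel (snd \<circ> g2)) S = emeasure \<mu> A * emeasure \<nu>2 S + emeasure \<mu> (B \<inter> S)" by (simp add: comp_def)
    define s where "s = measure \<mu> (B \<inter> S)"
    have es: "emeasure \<mu> (B \<inter> S) = ennreal s" "0 \<le> s" unfolding s_def by (auto simp: M.emeasure_eq_measure)
    have n2S: "emeasure \<nu>2 S = ennreal (s / (1 - a))" using n2[OF S] es a01 by (simp add: divide_ennreal)
    have "emeasure (distr Q2 borel (snd \<circ> g2)) S = ennreal (a * (s / (1 - a)) + s)"
      using eq es n2S eA a01 by (simp add: ennreal_mult[symmetric] ennreal_plus[symmetric] del: ennreal_plus)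
    also have "a * (s / (1 - a)) + s = s / (1 - a)" using a01 by (simp add: field_simps)
    finally show "emeasure (distr Q2 borel (snd \<circ> g2)) S = emeasure \<nu>2 S" using n2S by (simp add: comp_def)
  qed
  finally show ?thesis .
qed

lemma pi1_cpl: "\<pi>1 \<in> couplings \<nu>1 \<mu>"
  unfolding couplings_def using pi1_marg1 pi1_marg2 prob_space.prob_space_distr[OF pQ1 g1m]
  by (simp add: \<pi>1_def)

lemma pi2_cpl: "\<pi>2 \<in> couplings \<mu> \<nu>2"
  unfolding couplings_def using pi2_marg1 pi2_marg2 prob_space.prob_space_distr[OF pQ2 g2m]
  by (simp add: \<pi>2_def)

end

context betw begin

lemma hm: "(\<lambda>w. ennreal (dist x (snd w) powr p)) \<in> borel_measurable (borel \<Otimes>\<^sub>M borel :: ('a \<times> 'a) measure)"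
  using measurable_snd mdp2e by (rule measurable_compose)

lemma indA_fst: "(\<lambda>w. indicator A (fst w) :: ennreal) \<in> borel_measurable (borel \<Otimes>\<^sub>M borel :: ('a \<times> 'a) measure)"
  using measurable_fst borel_measurable_indicator[OF A_sets(2)] by (rule measurable_compose)

lemma indB_snd: "(\<lambda>w. indicator B (snd w) :: ennreal) \<in> borel_measurable (borel \<Otimes>\<^sub>M borel :: ('a \<times> 'a) measure)"
  using measurable_snd borel_measurable_indicator[OF B_sets(2)] by (rule measurable_compose)

lemma cost1: "(\<integral>\<^sup>+ v. ennreal (dist (fst v) (snd v) powr p) \<partial>\<pi>1) = I"
proof -
  have "(\<integral>\<^sup>+ v. ennreal (dist (fst v) (snd v) powr p) \<partial>\<pi>1) =
      (\<integral>\<^sup>+ w. ennreal (dist (fst (g1 w)) (snd (g1 w)) powr p) \<partial>Q1)"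
    unfolding \<pi>1_def by (rule nn_integral_distr[OF g1m]) (simp add: mdp3e)
  also have "\<dots> = (\<integral>\<^sup>+ w. ennreal (dist x (snd w) powr p) * indicator B (snd w) \<partial>Q1)"
  proof (rule nn_integral_cong_AE)
    have "emeasure Q1 (B \<times> UNIV) = emeasure \<nu>1 B * emeasure \<mu> UNIV"
      unfolding Q1_def using B_sets W1 sp by (subst M.emeasure_pair_measure_Times) auto
    also have "\<dots> = 0" using n1B by simp
    finally have z: "emeasure Q1 (B \<times> UNIV) = 0" .
    have ae: "AE w in Q1. fst w \<in> A"
    proof (rule AE_I'[of "B \<times> UNIV"])
      show "B \<times> UNIV \<in> null_sets Q1" using z B_sets sQ1 by (auto simp: null_sets_def)
      show "{w \<in> space Q1. \<not> fst w \<in> A} \<subseteq> B \<times> UNIV" by (auto simp: B_def)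
    qed
    have eq: "fst w \<in> A \<longrightarrow> ennreal (dist (fst (g1 w)) (snd (g1 w)) powr p) = ennreal (dist x (snd w) powr p) * indicator B (snd w)" for w
      using ball_ultra[OF U, of "fst w" x r "snd w"] p unfolding g1_def A_def B_def
      by (auto simp: mem_Times_iff split: split_indicator)
    show "AE w in Q1. ennreal (dist (fst (g1 w)) (snd (g1 w)) powr p) = ennreal (dist x (snd w) powr p) * indicator B (snd w)"
      using ae by (rule AE_mp) (rule AE_I2, rule eq)
  qed
  also have "\<dots> = I"
    unfolding Q1_def I_def
    by (rule nn_snd_Q[OF W1(2) sp(3), of "\<lambda>y. ennreal (dist x y powr p) * indicator B y"])
       (rule meas_sets[OF sp(2)], use mdp2e B_sets in simp)
  finally show ?thesis .
qed

lemma cost2: "(\<integral>\<^sup>+ v. ennreal (dist (fst v) (snd v) powr p) \<partial>\<pi>2) = ennreal a * C"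
proof -
  have "(\<integral>\<^sup>+ v. ennreal (dist (fst v) (snd v) powr p) \<partial>\<pi>2) =
      (\<integral>\<^sup>+ w. ennreal (dist (fst (g2 w)) (snd (g2 w)) powr p) \<partial>Q2)"
    unfolding \<pi>2_def by (rule nn_integral_distr[OF g2m]) (simp add: mdp3e)
  also have "\<dots> = (\<integral>\<^sup>+ w. indicator A (fst w) * ennreal (dist x (snd w) powr p) \<partial>Q2)"
  proof (rule nn_integral_cong_AE)
    have "emeasure Q2 (UNIV \<times> A) = emeasure \<mu> UNIV * emeasure \<nu>2 A"
      unfolding Q2_def using A_sets W2 sp by (subst N2.emeasure_pair_measure_Times) auto
    also have "\<dots> = 0" using n2A by simp
    finally have z: "emeasure Q2 (UNIV \<times> A) = 0" .
    have ae: "AE w in Q2. snd w \<notin> A"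
    proof (rule AE_I'[of "UNIV \<times> A"])
      show "UNIV \<times> A \<in> null_sets Q2" using z A_sets sQ2 by (auto simp: null_sets_def)
      show "{w \<in> space Q2. \<not> snd w \<notin> A} \<subseteq> UNIV \<times> A" by auto
    qed
    have eq: "snd w \<notin> A \<longrightarrow> ennreal (dist (fst (g2 w)) (snd (g2 w)) powr p) = indicator A (fst w) * ennreal (dist x (snd w) powr p)" for w
      using ball_ultra[OF U, of "fst w" x r "snd w"] p unfolding g2_def A_def B_def
      by (auto simp: mem_Times_iff split: split_indicator)
    show "AE w in Q2. ennreal (dist (fst (g2 w)) (snd (g2 w)) powr p) = indicator A (fst w) * ennreal (dist x (snd w) powr p)"
      using ae by (rule AE_mp) (rule AE_I2, rule eq)
  qed
  also have "\<dots> = (\<integral>\<^sup>+ u. \<integral>\<^sup>+ v. indicator A u * ennreal (dist x v powr p) \<partial>\<nu>2 \<partial>\<mu>)"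
  proof -
    have m: "(\<lambda>w. indicator A (fst w) * ennreal (dist x (snd w) powr p)) \<in> borel_measurable (\<mu> \<Otimes>\<^sub>M \<nu>2)"
      by (rule meas_Q[OF sp(2) W2(1)], rule borel_measurable_times_ennreal[OF indA_fst hm])
    show ?thesis unfolding Q2_def using N2.nn_integral_fst[OF m] by simp
  qed
  also have "\<dots> = (\<integral>\<^sup>+ u. indicator A u * C \<partial>\<mu>)"
  proof (rule nn_integral_cong)
    fix u
    show "(\<integral>\<^sup>+ v. indicator A u * ennreal (dist x v powr p) \<partial>\<nu>2) = indicator A u * C"
      unfolding C_def by (rule nn_integral_cmult, rule meas_sets[OF W2(1) mdp2e])
  qed
  also have "\<dots> = emeasure \<mu> A * C"
    using A_sets by (subst nn_integral_multc) auto
  finally show ?thesis using eA by simp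
qed

lemma between: "Tc p \<nu>1 \<mu> + Tc p \<mu> \<nu>2 \<le> Tc p \<nu>1 \<nu>2"
proof -
  have f1: "(\<integral>\<^sup>+ v. ennreal (dist (fst v) (snd v) powr p) \<partial>\<pi>1) < \<top>" using cost1 I_fin by simp
  have f2: "(\<integral>\<^sup>+ v. ennreal (dist (fst v) (snd v) powr p) \<partial>\<pi>2) < \<top>" using cost2 C_i by (simp add: ennreal_mult_less_top)
  have t1: "Tc p \<nu>1 \<mu> \<le> i" using Tc_le[OF pi1_cpl f1] cost1 i_def by simp
  have t2: "Tc p \<mu> \<nu>2 \<le> a * (i / (1 - a))"
    using Tc_le[OF pi2_cpl f2] cost2 C_i a01 by (simp add: enn2real_mult)
  have "i + a * (i / (1 - a)) = i / (1 - a)" using a01 by (simp add: field_simps)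
  then show ?thesis using t1 t2 Tc12 C_i by simp
qed

end

lemma nondirac_between:
  fixes \<mu> :: "'a::polish_space measure"
  assumes U: "ultrametric TYPE('a)" and p: "0 < p" and mu: "\<mu> \<in> wasserstein_space p"
    and nd: "\<And>x. \<mu> \<noteq> return borel x"
  shows "\<exists>\<nu>1\<in>wasserstein_space p. \<exists>\<nu>2\<in>wasserstein_space p. \<nu>1 \<noteq> \<mu> \<and> \<nu>2 \<noteq> \<mu> \<and>
           Tc p \<nu>1 \<mu> + Tc p \<mu> \<nu>2 \<le> Tc p \<nu>1 \<nu>2"
proof -
  obtain x r where xr: "0 < emeasure \<mu> (cball x r)" "emeasure \<mu> (cball x r) < 1"
    using exists_ball[OF mu nd] by blast
  interpret betw p \<mu> x r using U p mu xr by unfold_locales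
  show ?thesis using n1W n2W ne1 ne2 between by blast
qed

lemma layer_cake':
  fixes Q :: "'b measure" and f :: "'b \<Rightarrow> real"
  assumes sf: "sigma_finite_measure Q" and fm: "f \<in> borel_measurable Q" and nn: "\<And>w. 0 \<le> f w"
  shows "(\<integral>\<^sup>+ w. ennreal (f w) \<partial>Q) = (\<integral>\<^sup>+ t. emeasure Q {w \<in> space Q. t < f w} * indicator {0<..} t \<partial>lborel)"
proof -
  interpret Q: sigma_finite_measure Q by (rule sf)
  interpret P: pair_sigma_finite lborel Q by unfold_locales
  define G where "G = {x \<in> space (lborel \<Otimes>\<^sub>M Q). 0 < fst x \<and> fst x < f (snd x)}"
  have f2: "(\<lambda>x. f (snd x)) \<in> borel_measurable (lborel \<Otimes>\<^sub>M Q)"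
    using measurable_snd fm by (rule measurable_compose)
  have f1: "fst \<in> borel_measurable (lborel \<Otimes>\<^sub>M Q)"
    using measurable_fst[of lborel Q] by simp
  have G1: "{x \<in> space (lborel \<Otimes>\<^sub>M Q). (0::real) < fst x} \<in> sets (lborel \<Otimes>\<^sub>M Q)"
    by (rule borel_measurable_less[OF borel_measurable_const f1])
  have G2: "{x \<in> space (lborel \<Otimes>\<^sub>M Q). fst x < f (snd x)} \<in> sets (lborel \<Otimes>\<^sub>M Q)"
    by (rule borel_measurable_less[OF f1 f2])
  have Gs: "G \<in> sets (lborel \<Otimes>\<^sub>M Q)"
  proof -
    have "G = {x \<in> space (lborel \<Otimes>\<^sub>M Q). (0::real) < fst x} \<inter> {x \<in> space (lborel \<Otimes>\<^sub>M Q). fst x < f (snd x)}"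
      unfolding G_def by auto
    then show ?thesis using G1 G2 by simp
  qed
  have mG: "(\<lambda>(t, w). indicator G (t, w) :: ennreal) \<in> borel_measurable (lborel \<Otimes>\<^sub>M Q)"
    using borel_measurable_indicator[OF Gs] by simp
  have inner1: "(\<integral>\<^sup>+ t. indicator G (t, w) \<partial>lborel) = ennreal (f w)" if w: "w \<in> space Q" for w
  proof -
    have "(\<integral>\<^sup>+ t. indicator G (t, w) \<partial>lborel) = (\<integral>\<^sup>+ t. indicator {0<..<f w} t \<partial>lborel)"
      using w by (intro nn_integral_cong) (auto simp: G_def space_pair_measure split: split_indicator)
    also have "\<dots> = ennreal (f w)" using nn[of w] by simp
    finally show ?thesis .
  qed
  have inner2: "(\<integral>\<^sup>+ w. indicator G (t, w) \<partial>Q) = emeasure Q {w \<in> space Q. t < f w} * indicator {0<..} t" for t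
  proof (cases "0 < t")
    case True
    have sm: "{w \<in> space Q. t < f w} \<in> sets Q" by (rule borel_measurable_less[OF borel_measurable_const fm])
    have "(\<integral>\<^sup>+ w. indicator G (t, w) \<partial>Q) = (\<integral>\<^sup>+ w. indicator {w \<in> space Q. t < f w} w \<partial>Q)"
      using True by (intro nn_integral_cong) (auto simp: G_def space_pair_measure split: split_indicator)
    also have "\<dots> = emeasure Q {w \<in> space Q. t < f w}" using sm by simp
    finally show ?thesis using True by simp
  next
    case False
    have "(\<integral>\<^sup>+ w. indicator G (t, w) \<partial>Q) = (\<integral>\<^sup>+ w. 0 \<partial>Q)"
      using False by (intro nn_integral_cong) (auto simp: G_def split: split_indicator)
    then show ?thesis using False by simp
  qed
  have "(\<integral>\<^sup>+ w. ennreal (f w) \<partial>Q) = (\<integral>\<^sup>+ w. (\<integral>\<^sup>+ t. indicator G (t, w) \<partial>lborel) \<partial>Q)"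
    by (intro nn_integral_cong) (simp add: inner1)
  also have "\<dots> = (\<integral>\<^sup>+ t. (\<integral>\<^sup>+ w. indicator G (t, w) \<partial>Q) \<partial>lborel)"
    using P.Fubini'[of "\<lambda>t w. indicator G (t, w)"] mG by simp
  also have "\<dots> = (\<integral>\<^sup>+ t. emeasure Q {w \<in> space Q. t < f w} * indicator {0<..} t \<partial>lborel)"
    by (simp add: inner2)
  finally show ?thesis .
qed

definition Bl :: "real \<Rightarrow> 'a::metric_space \<Rightarrow> real \<Rightarrow> 'a set" where
  "Bl p z t = {y. dist z y powr p \<le> t}"

lemma Bl_same:
  assumes U: "ultrametric TYPE('a::metric_space)" and p: "0 < p" and c: "dist (c::'a) y powr p \<le> t"
  shows "Bl p y t = Bl p c t"
proof -
  have "z \<in> Bl p c t" if "z \<in> Bl p y t" for z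
  proof -
    have "dist c z powr p \<le> max (dist c y powr p) (dist y z powr p)" by (rule ultra_powr[OF U p])
    then show ?thesis using that c by (auto simp: Bl_def)
  qed
  moreover have "z \<in> Bl p y t" if "z \<in> Bl p c t" for z
  proof -
    have "dist y z powr p \<le> max (dist y c powr p) (dist c z powr p)" by (rule ultra_powr[OF U p])
    then show ?thesis using that c by (auto simp: Bl_def dist_commute)
  qed
  ultimately show ?thesis by blast
qed

lemma Bl_sets: "Bl p (z::'a::polish_space) t \<in> sets borel"
proof -
  have "{y \<in> space borel. dist z y powr p \<le> t} \<in> sets borel"
    by (rule borel_measurable_le[OF meas_dp2 borel_measurable_const])
  then show ?thesis by (simp add: Bl_def)
qed

lemma Bl_mem: "y \<in> Bl p z t \<longleftrightarrow> dist z y powr p \<le> t" by (simp add: Bl_def)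

lemma dense_seq:
  obtains d :: "nat \<Rightarrow> 'a::polish_space" where "\<And>z e. 0 < e \<Longrightarrow> \<exists>k. dist z (d k) < e"
proof -
  obtain D :: "'a set" where D: "countable D" "\<And>X. open X \<Longrightarrow> X \<noteq> {} \<Longrightarrow> \<exists>d\<in>D. d \<in> X"
    by (rule countable_dense_setE) blast
  define d where "d = from_nat_into D"
  have "\<exists>k. dist z (d k) < e" if e: "0 < e" for z e
  proof -
    obtain y where y: "y \<in> D" "y \<in> ball z e" using D(2)[of "ball z e"] e by auto
    obtain k where "d k = y" using from_nat_into_surj[OF D(1) y(1)] d_def by blast
    then show ?thesis using y(2) by (auto intro!: exI[of _ k])
  qed
  then show ?thesis using that by blast
qed

lemma Bl_cover:
  assumes p: "0 < p" and t: "0 < t"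
    and d: "\<And>z e. 0 < e \<Longrightarrow> \<exists>k. dist z (d k) < e"
  shows "\<exists>k. z \<in> Bl p (d k) t"
proof -
  obtain k where k: "dist z (d k) < t powr (1/p)" using d[of "t powr (1/p)"] t by auto
  have "dist (d k) z powr p \<le> (t powr (1/p)) powr p"
    using k p by (intro powr_mono2) (auto simp: dist_commute)
  also have "\<dots> = t" using p t by (simp add: powr_powr)
  finally show ?thesis by (auto simp: Bl_mem)
qed

lemma partition_exists:
  assumes U: "ultrametric TYPE('a::polish_space)" and p: "0 < p" and t: "0 < t"
  shows "\<exists>C :: nat \<Rightarrow> 'a set. disjoint_family C \<and> (\<forall>n. C n \<in> sets borel) \<and> (\<Union>n. C n) = UNIV \<and>
           (\<forall>n y. y \<in> C n \<longrightarrow> Bl p y t = C n)"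
proof -
  obtain d :: "nat \<Rightarrow> 'a" where d: "\<And>z e. 0 < e \<Longrightarrow> \<exists>k. dist z (d k) < e" by (rule dense_seq) blast
  define Cb where "Cb n = Bl p (d n) t" for n
  define C where "C = disjointed Cb"
  have disj: "disjoint_family C" unfolding C_def by (rule disjoint_family_disjointed)
  have sets: "C n \<in> sets borel" for n
    unfolding C_def using sets.range_disjointed_sets[of Cb borel] Bl_sets by (auto simp: Cb_def)
  have cov: "(\<Union>n. C n) = UNIV"
    unfolding C_def UN_disjointed_eq Cb_def using Bl_cover[OF p t d] by blast
  have key: "Bl p y t = C n" if y: "y \<in> C n" for n y
  proof -
    have yCb: "y \<in> Cb n" using y disjointed_subset[of Cb n] unfolding C_def by blast
    have yn: "y \<notin> Cb m" if "m < n" for m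
      using y that unfolding C_def disjointed_def by auto
    have eqb: "Bl p y t = Cb n" using Bl_same[OF U p, of "d n" y t] yCb by (simp add: Cb_def Bl_mem)
    have dis: "Cb m \<inter> Cb n = {}" if m: "m < n" for m
    proof (rule ccontr)
      assume "Cb m \<inter> Cb n \<noteq> {}"
      then obtain z where z: "z \<in> Cb m" "z \<in> Cb n" by blast
      have "Bl p z t = Cb m" using Bl_same[OF U p, of "d m" z t] z(1) by (simp add: Cb_def Bl_mem)
      moreover have "Bl p z t = Cb n" using Bl_same[OF U p, of "d n" z t] z(2) by (simp add: Cb_def Bl_mem)
      ultimately have "Cb m = Cb n" by simp
      then show False using yn[OF m] yCb by simp
    qed
    have "C n = Cb n" unfolding C_def disjointed_def
    proof (intro set_eqI iffI)
      fix z assume "z \<in> Cb n"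
      moreover have "z \<notin> Cb m" if "m < n" for m using dis[OF that] \<open>z \<in> Cb n\<close> by blast
      ultimately show "z \<in> Cb n - \<Union> (Cb ` {0..<n})" by auto
    qed auto
    then show ?thesis using eqb by simp
  qed
  show ?thesis using disj sets cov key by blast
qed

lemma pair_le_sum:
  fixes M N :: "'a::polish_space measure"
  assumes U: "ultrametric TYPE('a)" and p: "0 < p"
    and M: "sets M = sets borel" and N: "sets N = sets borel" and pN: "prob_space N"
    and C: "disjoint_family C" "\<And>n. C n \<in> sets borel" "(\<Union>n. C n) = UNIV" "\<And>n y. y \<in> C n \<Longrightarrow> Bl p y t = C n"
  shows "emeasure (M \<Otimes>\<^sub>M N) {w. dist (fst w) (snd w) powr p \<le> t} = (\<Sum>n. emeasure M (C n) * emeasure N (C n))"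
proof -
  interpret N: prob_space N by (rule pN)
  have eq: "{w. dist (fst w) (snd w) powr p \<le> t} = (\<Union>n. C n \<times> C n)"
  proof (intro set_eqI iffI)
    fix w :: "'a \<times> 'a" assume w: "w \<in> {w. dist (fst w) (snd w) powr p \<le> t}"
    obtain n where n: "fst w \<in> C n" using C(3) by blast
    have "snd w \<in> Bl p (fst w) t" using w by (simp add: Bl_mem)
    then have "snd w \<in> C n" using C(4)[OF n] by simp
    then show "w \<in> (\<Union>n. C n \<times> C n)" using n by (auto simp: mem_Times_iff)
  next
    fix w :: "'a \<times> 'a" assume "w \<in> (\<Union>n. C n \<times> C n)"
    then obtain n where n: "fst w \<in> C n" "snd w \<in> C n" by (auto simp: mem_Times_iff)
    then have "snd w \<in> Bl p (fst w) t" using C(4)[OF n(1)] by simp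
    then show "w \<in> {w. dist (fst w) (snd w) powr p \<le> t}" by (simp add: Bl_mem)
  qed
  have disj: "disjoint_family (\<lambda>n. C n \<times> C n)"
    using C(1) unfolding disjoint_family_on_def by auto
  have rs: "range (\<lambda>n. C n \<times> C n) \<subseteq> sets (M \<Otimes>\<^sub>M N)"
    using C(2) M N by auto
  have "emeasure (M \<Otimes>\<^sub>M N) {w. dist (fst w) (snd w) powr p \<le> t} = (\<Sum>n. emeasure (M \<Otimes>\<^sub>M N) (C n \<times> C n))"
    unfolding eq by (rule suminf_emeasure[OF rs disj, symmetric])
  also have "\<dots> = (\<Sum>n. emeasure M (C n) * emeasure N (C n))"
    using C(2) M N by (subst N.emeasure_pair_measure_Times) auto
  finally show ?thesis .
qed

definition Part :: "real \<Rightarrow> real \<Rightarrow> nat \<Rightarrow> 'a::polish_space set" where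
  "Part p t = (SOME C. disjoint_family C \<and> (\<forall>n. C n \<in> sets borel) \<and> (\<Union>n. C n) = UNIV \<and>
           (\<forall>n y. y \<in> C n \<longrightarrow> Bl p y t = C n))"

lemma Part:
  assumes U: "ultrametric TYPE('a::polish_space)" and p: "0 < p" and t: "0 < t"
  shows "disjoint_family (Part p t :: nat \<Rightarrow> 'a set)" "\<And>n. (Part p t n :: 'a set) \<in> sets borel"
    "(\<Union>n. (Part p t n :: 'a set)) = UNIV" "\<And>n (y::'a). y \<in> Part p t n \<Longrightarrow> Bl p y t = Part p t n"
  using someI_ex[OF partition_exists[OF U p t]] unfolding Part_def by blast+

lemma probsum:
  fixes M :: "'a::polish_space measure"
  assumes U: "ultrametric TYPE('a)" and p: "0 < p" and t: "0 < t"
    and M: "sets M = sets borel" "prob_space M"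
  shows "(\<lambda>n. measure M (Part p t n)) sums 1"
proof -
  interpret M: prob_space M by (rule M(2))
  note P = Part[OF U p t]
  have sp: "space M = UNIV" using sets_eq_imp_space_eq[OF M(1)] by simp
  have rs: "range (Part p t) \<subseteq> sets M" using P(2) M(1) by auto
  have "(\<Sum>n. emeasure M (Part p t n)) = emeasure M (\<Union>n. Part p t n)"
    by (rule suminf_emeasure[OF rs P(1)])
  also have "\<dots> = 1" using P(3) M.emeasure_space_1 sp by simp
  finally have s0: "(\<Sum>n. emeasure M (Part p t n)) = 1" .
  define m where "m n = measure M (Part p t n)" for n
  have m0: "0 \<le> m n" for n unfolding m_def by simp
  have s1: "(\<Sum>n. ennreal (m n)) = 1" using s0 unfolding m_def M.emeasure_eq_measure .
  have nt: "(\<Sum>n. ennreal (m n)) \<noteq> \<top>" unfolding s1 by simp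
  have sm: "summable m" by (rule summable_suminf_not_top[OF m0 nt])
  have "ennreal (\<Sum>n. m n) = 1" using suminf_ennreal2[OF m0 sm] s1 by simp
  then have "(\<Sum>n. m n) = 1"
    using suminf_nonneg[OF sm m0] ennreal_eq_1 by blast
  then show ?thesis using sm unfolding m_def by (simp add: summable_sums_iff)
qed

lemma Kform:
  fixes M N :: "'a::polish_space measure"
  assumes U: "ultrametric TYPE('a)" and p: "0 < p" and t: "0 < t"
    and M: "sets M = sets borel" "prob_space M" and N: "sets N = sets borel" "prob_space N"
  shows "summable (\<lambda>n. measure M (Part p t n) * measure N (Part p t n))"
    "measure (M \<Otimes>\<^sub>M N) {w \<in> space (M \<Otimes>\<^sub>M N). t < dist (fst w) (snd w) powr p} =
       1 - (\<Sum>n. measure M (Part p t n) * measure N (Part p t n))"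
proof -
  interpret M: prob_space M by (rule M(2))
  interpret N: prob_space N by (rule N(2))
  interpret P: pair_prob_space M N by unfold_locales
  note P = Part[OF U p t]
  have spM: "space M = UNIV" using sets_eq_imp_space_eq[OF M(1)] by simp
  have spN: "space N = UNIV" using sets_eq_imp_space_eq[OF N(1)] by simp
  have spQ: "space (M \<Otimes>\<^sub>M N) = UNIV" by (simp add: space_pair_measure spM spN)
  have smM: "summable (\<lambda>n. measure M (Part p t n))" using probsum[OF U p t M] by (simp add: sums_iff)
  show sm: "summable (\<lambda>n. measure M (Part p t n) * measure N (Part p t n))"
  proof (rule summable_comparison_test[OF _ smM])
    show "\<exists>N0. \<forall>n\<ge>N0. norm (measure M (Part p t n) * measure N (Part p t n)) \<le> measure M (Part p t n)"
      by (intro exI[of _ 0] allI impI) (simp add: mult_left_le)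
  qed
  have "emeasure (M \<Otimes>\<^sub>M N) {w. dist (fst w) (snd w) powr p \<le> t} = (\<Sum>n. emeasure M (Part p t n) * emeasure N (Part p t n))"
    by (rule pair_le_sum[OF U p M(1) N(1) N(2) P])
  also have "\<dots> = (\<Sum>n. ennreal (measure M (Part p t n) * measure N (Part p t n)))"
    by (simp add: M.emeasure_eq_measure N.emeasure_eq_measure ennreal_mult)
  also have "\<dots> = ennreal (\<Sum>n. measure M (Part p t n) * measure N (Part p t n))"
    by (rule suminf_ennreal2[OF _ sm]) simp
  finally have le: "measure (M \<Otimes>\<^sub>M N) {w. dist (fst w) (snd w) powr p \<le> t} = (\<Sum>n. measure M (Part p t n) * measure N (Part p t n))"
    using suminf_nonneg[OF sm] by (simp add: P.emeasure_eq_measure)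
  have ms: "{w. dist (fst w) (snd w) powr p \<le> t} \<in> sets (M \<Otimes>\<^sub>M N)"
  proof -
    have "{w \<in> space (M \<Otimes>\<^sub>M N). dist (fst w) (snd w) powr p \<le> t} \<in> sets (M \<Otimes>\<^sub>M N)"
      by (rule borel_measurable_le[OF meas_Q[OF M(1) N(1) meas_dp3] borel_measurable_const])
    then show ?thesis using spQ by simp
  qed
  have "{w \<in> space (M \<Otimes>\<^sub>M N). t < dist (fst w) (snd w) powr p} = space (M \<Otimes>\<^sub>M N) - {w. dist (fst w) (snd w) powr p \<le> t}"
    using spQ by auto
  then show "measure (M \<Otimes>\<^sub>M N) {w \<in> space (M \<Otimes>\<^sub>M N). t < dist (fst w) (snd w) powr p} =
       1 - (\<Sum>n. measure M (Part p t n) * measure N (Part p t n))"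
    using P.prob_compl[OF ms] le by simp
qed

lemma Rform:
  fixes \<alpha> \<beta> :: "'a::polish_space measure"
  assumes U: "ultrametric TYPE('a)" and p: "0 < p" and t: "0 < t"
    and A: "sets \<alpha> = sets borel" "prob_space \<alpha>" and B: "sets \<beta> = sets borel" "prob_space \<beta>"
  defines "K \<equiv> \<lambda>M N. measure (M \<Otimes>\<^sub>M N) {w \<in> space (M \<Otimes>\<^sub>M N). t < dist (fst w) (snd w) powr p}"
  shows "2 * K \<alpha> \<beta> - K \<alpha> \<alpha> - K \<beta> \<beta> = (\<Sum>n. (measure \<alpha> (Part p t n) - measure \<beta> (Part p t n))\<^sup>2)"
    "summable (\<lambda>n. (measure \<alpha> (Part p t n) - measure \<beta> (Part p t n))\<^sup>2)"
proof -
  define a where "a n = measure \<alpha> (Part p t n)" for n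
  define b where "b n = measure \<beta> (Part p t n)" for n
  have sab: "summable (\<lambda>n. a n * b n)" unfolding a_def b_def by (rule Kform(1)[OF U p t A B])
  have saa: "summable (\<lambda>n. a n * a n)" unfolding a_def by (rule Kform(1)[OF U p t A A])
  have sbb: "summable (\<lambda>n. b n * b n)" unfolding b_def by (rule Kform(1)[OF U p t B B])
  have Kab: "K \<alpha> \<beta> = 1 - (\<Sum>n. a n * b n)" unfolding K_def a_def b_def by (rule Kform(2)[OF U p t A B])
  have Kaa: "K \<alpha> \<alpha> = 1 - (\<Sum>n. a n * a n)" unfolding K_def a_def by (rule Kform(2)[OF U p t A A])
  have Kbb: "K \<beta> \<beta> = 1 - (\<Sum>n. b n * b n)" unfolding K_def b_def by (rule Kform(2)[OF U p t B B])
  have eqf: "(\<lambda>n. (a n - b n)\<^sup>2) = (\<lambda>n. (a n * a n + b n * b n) - 2 * (a n * b n))"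
    by (auto simp: power2_eq_square algebra_simps)
  have s1: "summable (\<lambda>n. a n * a n + b n * b n)" using saa sbb by (rule summable_add)
  have s2: "summable (\<lambda>n. 2 * (a n * b n))" using sab by (rule summable_mult)
  show "summable (\<lambda>n. (measure \<alpha> (Part p t n) - measure \<beta> (Part p t n))\<^sup>2)"
    using summable_diff[OF s1 s2] eqf unfolding a_def b_def by simp
  have "(\<Sum>n. (a n - b n)\<^sup>2) = (\<Sum>n. a n * a n + b n * b n) - (\<Sum>n. 2 * (a n * b n))"
    unfolding eqf by (rule suminf_diff[OF s1 s2, symmetric])
  also have "\<dots> = (\<Sum>n. a n * a n) + (\<Sum>n. b n * b n) - 2 * (\<Sum>n. a n * b n)"
    using suminf_add[OF saa sbb] suminf_mult[OF sab, of 2] by simp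
  finally show "2 * K \<alpha> \<beta> - K \<alpha> \<alpha> - K \<beta> \<beta> = (\<Sum>n. (measure \<alpha> (Part p t n) - measure \<beta> (Part p t n))\<^sup>2)"
    unfolding a_def b_def using Kab Kaa Kbb unfolding a_def b_def by simp
qed

lemma eq_on_balls:
  fixes \<alpha> \<beta> :: "'a::polish_space measure"
  assumes U: "ultrametric TYPE('a)" and p: "0 < p"
    and A: "sets \<alpha> = sets borel" "prob_space \<alpha>" and B: "sets \<beta> = sets borel" "prob_space \<beta>"
    and eq: "\<And>z r. 0 < r \<Longrightarrow> emeasure \<alpha> (Bl p z r) = emeasure \<beta> (Bl p z r)"
  shows "\<alpha> = \<beta>"
proof -
  interpret A: prob_space \<alpha> by (rule A(2))
  define E :: "'a set set" where "E = {Bl p z r | z r. 0 < r} \<union> {{}}"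
  have Int: "Int_stable E"
  proof (rule Int_stableI)
    fix a b assume a: "a \<in> E" and b: "b \<in> E"
    show "a \<inter> b \<in> E"
    proof (cases "a \<inter> b = {}")
      case True then show ?thesis by (simp add: E_def)
    next
      case False
      then obtain y where y: "y \<in> a" "y \<in> b" by blast
      from a y obtain z1 r1 where a1: "a = Bl p z1 r1" "0 < r1" by (auto simp: E_def)
      from b y obtain z2 r2 where b1: "b = Bl p z2 r2" "0 < r2" by (auto simp: E_def)
      have "a = Bl p y r1" using Bl_same[OF U p, of z1 y r1] y(1) a1 by (simp add: Bl_mem)
      moreover have "b = Bl p y r2" using Bl_same[OF U p, of z2 y r2] y(2) b1 by (simp add: Bl_mem)
      ultimately have "a \<inter> b = Bl p y (min r1 r2)" by (auto simp: Bl_mem)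
      moreover have "Bl p y (min r1 r2) \<in> E" using a1 b1 unfolding E_def by (intro UnI1 CollectI exI[of _ y] exI[of _ "min r1 r2"]) simp
      ultimately show ?thesis by simp
    qed
  qed
  obtain dd :: "nat \<Rightarrow> 'a" where dd: "\<And>z e. 0 < e \<Longrightarrow> \<exists>k. dist z (dd k) < e" by (rule dense_seq) blast
  have opn: "S \<in> sigma_sets UNIV E" if S: "open S" for S
  proof -
    define F where "F = (\<lambda>(d, q). Bl p d q) ` {(d, q). d \<in> range dd \<and> q \<in> \<rat> \<and> 0 < q \<and> Bl p d q \<subseteq> S}"
    have cF: "countable F"
    proof -
      have "{(d, q). d \<in> range dd \<and> q \<in> \<rat> \<and> 0 < q \<and> Bl p d q \<subseteq> S} \<subseteq> range dd \<times> \<rat>" by auto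
      moreover have "countable (range dd \<times> \<rat>)" using countable_rat by auto
      ultimately show ?thesis unfolding F_def by (intro countable_image) (rule countable_subset)
    qed
    have FE: "F \<subseteq> E" unfolding F_def E_def by auto
    have "S = \<Union>F"
    proof (intro set_eqI iffI)
      fix y assume yS: "y \<in> S"
      obtain e where e: "0 < e" "ball y e \<subseteq> S" using S yS open_contains_ball by blast
      define t where "t = (e / 2) powr p"
      have t0: "0 < t" using e by (simp add: t_def)
      have sub: "Bl p y t \<subseteq> S"
      proof
        fix z assume "z \<in> Bl p y t"
        then have z: "dist y z powr p \<le> (e/2) powr p" by (simp add: Bl_mem t_def)
        have "dist y z \<le> e / 2"
        proof (rule ccontr)
          assume "\<not> dist y z \<le> e / 2"
          then have "(e/2) powr p < dist y z powr p" using e p by (intro powr_less_mono2) auto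
          then show False using z by simp
        qed
        then have "z \<in> ball y e" using e by simp
        then show "z \<in> S" using e by blast
      qed
      obtain k where k: "dist y (dd k) < (t/2) powr (1/p)" using dd[of "(t/2) powr (1/p)"] t0 by auto
      have "dist (dd k) y powr p < ((t/2) powr (1/p)) powr p"
        using k p by (intro powr_less_mono2) (auto simp: dist_commute)
      also have "\<dots> = t / 2" using p t0 by (simp add: powr_powr)
      finally have dk: "dist (dd k) y powr p < t / 2" .
      obtain q where q: "q \<in> \<rat>" "t / 2 < q" "q < t" using Rats_dense_in_real[of "t/2" t] t0 by auto
      have q0: "0 < q" using q t0 by simp
      have "Bl p y q = Bl p (dd k) q" using Bl_same[OF U p, of "dd k" y q] dk q by simp
      moreover have "Bl p y q \<subseteq> Bl p y t" using q by (auto simp: Bl_mem)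
      ultimately have "Bl p (dd k) q \<subseteq> S" using sub by simp
      then have "Bl p (dd k) q \<in> F" unfolding F_def using q q0 by force
      moreover have "y \<in> Bl p (dd k) q" using dk q by (simp add: Bl_mem)
      ultimately show "y \<in> \<Union>F" by blast
    next
      fix y assume "y \<in> \<Union>F"
      then show "y \<in> S" unfolding F_def by auto
    qed
    then show ?thesis using cF FE by (auto intro!: sigma_sets_UNION)
  qed
  have sE: "sets borel = sigma_sets UNIV E"
  proof -
    have "sigma_sets UNIV {S. open S} = sigma_sets UNIV E"
    proof (rule sigma_sets_eqI)
      fix a assume "a \<in> {S :: 'a set. open S}" then show "a \<in> sigma_sets UNIV E" using opn by simp
    next
      fix b assume "b \<in> E"
      then have "b \<in> sets borel" using Bl_sets by (auto simp: E_def)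
      then show "b \<in> sigma_sets UNIV {S. open S}" by (simp add: sets_borel)
    qed
    then show ?thesis by (simp add: sets_borel)
  qed
  fix z0 :: 'a
  define AA where "AA k = Bl p z0 (real (Suc k))" for k
  have AAE: "range AA \<subseteq> E"
  proof
    fix X assume "X \<in> range AA"
    then obtain k where "X = Bl p z0 (real (Suc k))" unfolding AA_def by auto
    then show "X \<in> E" unfolding E_def by (intro UnI1 CollectI exI[of _ z0] exI[of _ "real (Suc k)"]) simp
  qed
  have AAU: "(\<Union>k. AA k) = UNIV"
  proof -
    have "y \<in> (\<Union>k. AA k)" for y
    proof -
      obtain k where "dist z0 y powr p < real k" using reals_Archimedean2 by blast
      then have "y \<in> AA k" by (simp add: AA_def Bl_mem)
      then show ?thesis by blast
    qed
    then show ?thesis by blast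
  qed
  show ?thesis
  proof (rule measure_eqI_generator_eq[OF Int, of UNIV _ _ AA])
    show "E \<subseteq> Pow UNIV" by simp
    fix X assume "X \<in> E"
    then show "emeasure \<alpha> X = emeasure \<beta> X" using eq by (auto simp: E_def)
  next
    show "sets \<alpha> = sigma_sets UNIV E" using A(1) sE by simp
    show "sets \<beta> = sigma_sets UNIV E" using B(1) sE by simp
    show "range AA \<subseteq> E" by (rule AAE)
    show "(\<Union>i. AA i) = UNIV" by (rule AAU)
    fix i show "emeasure \<alpha> (AA i) \<noteq> \<infinity>" by (simp add: A.emeasure_eq_measure)
  qed
qed

lemma extend_good:
  fixes \<alpha> \<beta> :: "'a::polish_space measure"
  assumes A: "sets \<alpha> = sets borel" "prob_space \<alpha>" and B: "sets \<beta> = sets borel" "prob_space \<beta>"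
    and ae: "AE t in lborel. 0 < t \<longrightarrow> (\<forall>z. emeasure \<alpha> (Bl p z t) = emeasure \<beta> (Bl p z t))"
    and r: "0 < r"
  shows "emeasure \<alpha> (Bl p z r) = emeasure \<beta> (Bl p z r)"
proof -
  interpret A: prob_space \<alpha> by (rule A(2))
  interpret B: prob_space \<beta> by (rule B(2))
  define good where "good t \<longleftrightarrow> (\<forall>z. emeasure \<alpha> (Bl p z t) = emeasure \<beta> (Bl p z t))" for t
  from ae obtain N where N: "{t \<in> space lborel. \<not> (0 < t \<longrightarrow> good t)} \<subseteq> N" "emeasure lborel N = 0" "N \<in> sets lborel"
    unfolding good_def by (rule AE_E)
  have ex: "\<exists>t. r < t \<and> t < r + 1 / real (Suc k) \<and> good t" for k
  proof (rule ccontr)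
    assume H: "\<not> ?thesis"
    have "{r<..<r + 1 / real (Suc k)} \<subseteq> N"
    proof
      fix t assume t: "t \<in> {r<..<r + 1 / real (Suc k)}"
      then have "\<not> good t" using H by auto
      moreover have "0 < t" using t r by simp
      ultimately show "t \<in> N" using N(1) by auto
    qed
    then have "emeasure lborel {r<..<r + 1 / real (Suc k)} \<le> emeasure lborel N"
      using N(3) by (intro emeasure_mono) auto
    then show False using N(2) by simp
  qed
  define g where "g k = (SOME t. r < t \<and> t < r + 1 / real (Suc k) \<and> good t)" for k
  have g: "r < g k" "g k < r + 1 / real (Suc k)" "good (g k)" for k
    using someI_ex[OF ex[of k]] unfolding g_def by auto
  define m where "m k = Min (g ` {..k})" for k
  have m_in: "m k \<in> g ` {..k}" for k unfolding m_def by (rule Min_in) auto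
  have mgood: "good (m k)" and mr: "r < m k" for k using m_in[of k] g by auto
  have mle: "m k \<le> g k" for k unfolding m_def by (rule Min_le) auto
  have mdec: "m k' \<le> m k" if "k \<le> k'" for k k'
    unfolding m_def using that by (intro Min_antimono) auto
  have inter: "Bl p z r = (\<Inter>k. Bl p z (m k))"
  proof (intro set_eqI iffI)
    fix y assume "y \<in> Bl p z r"
    then show "y \<in> (\<Inter>k. Bl p z (m k))" using mr by (auto simp: Bl_mem intro: order_trans less_imp_le)
  next
    fix y assume y: "y \<in> (\<Inter>k. Bl p z (m k))"
    have "dist z y powr p - r \<le> 2 / real (Suc k)" for k
    proof -
      have "dist z y powr p \<le> m k" using y by (auto simp: Bl_mem)
      also have "\<dots> < r + 1 / real (Suc k)" using mle[of k] g(2)[of k] by simp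
      finally show ?thesis by (simp add: field_simps)
    qed
    then have "dist z y powr p - r \<le> 0" by (rule small_le_zero)
    then show "y \<in> Bl p z r" by (simp add: Bl_mem)
  qed
  have dec: "decseq (\<lambda>k. Bl p z (m k))"
    unfolding decseq_def
  proof (intro allI impI subsetI)
    fix k k' y assume kk: "k \<le> k'" and y: "y \<in> Bl p z (m k')"
    then show "y \<in> Bl p z (m k)" using mdec[OF kk] by (simp add: Bl_mem)
  qed
  have rsA: "range (\<lambda>k. Bl p z (m k)) \<subseteq> sets \<alpha>" using A(1) Bl_sets by auto
  have rsB: "range (\<lambda>k. Bl p z (m k)) \<subseteq> sets \<beta>" using B(1) Bl_sets by auto
  have "emeasure \<alpha> (Bl p z r) = (INF k. emeasure \<alpha> (Bl p z (m k)))"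
    unfolding inter by (rule INF_emeasure_decseq[OF rsA dec, symmetric]) (simp add: A.emeasure_eq_measure)
  also have "\<dots> = (INF k. emeasure \<beta> (Bl p z (m k)))"
    using mgood unfolding good_def by simp
  also have "\<dots> = emeasure \<beta> (Bl p z r)"
    unfolding inter by (rule INF_emeasure_decseq[OF rsB dec]) (simp add: B.emeasure_eq_measure)
  finally show ?thesis .
qed

lemma Lpot:
  fixes M N :: "'a::polish_space measure"
  assumes M: "sets M = sets borel" "prob_space M" and N: "sets N = sets borel" "prob_space N"
  shows "(\<integral>\<^sup>+ w. ennreal (dist (fst w) (snd w) powr p) \<partial>(M \<Otimes>\<^sub>M N)) =
     (\<integral>\<^sup>+ x. (\<integral>\<^sup>+ y. ennreal (dist y x powr p) \<partial>N) \<partial>M)"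
proof -
  interpret N: prob_space N by (rule N(2))
  have f: "(\<lambda>w. ennreal (dist (fst w) (snd w) powr p)) \<in> borel_measurable (M \<Otimes>\<^sub>M N)"
    by (rule meas_Q[OF M(1) N(1)], rule measurable_compose[OF meas_dp3]) simp
  have "(\<integral>\<^sup>+ w. ennreal (dist (fst w) (snd w) powr p) \<partial>(M \<Otimes>\<^sub>M N)) =
     (\<integral>\<^sup>+ x. (\<integral>\<^sup>+ y. ennreal (dist x y powr p) \<partial>N) \<partial>M)"
    using N.nn_integral_fst[OF f] by simp
  also have "\<dots> = (\<integral>\<^sup>+ x. (\<integral>\<^sup>+ y. ennreal (dist y x powr p) \<partial>N) \<partial>M)"
    by (simp add: dist_commute)
  finally show ?thesis .
qed

definition KK :: "real \<Rightarrow> 'a::metric_space measure \<Rightarrow> 'a measure \<Rightarrow> real \<Rightarrow> real" where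
  "KK p M N t = measure (M \<Otimes>\<^sub>M N) {w \<in> space (M \<Otimes>\<^sub>M N). t < dist (fst w) (snd w) powr p}"

lemma Lcake:
  fixes M N :: "'a::polish_space measure"
  assumes M: "sets M = sets borel" "prob_space M" and N: "sets N = sets borel" "prob_space N"
  shows "(\<integral>\<^sup>+ w. ennreal (dist (fst w) (snd w) powr p) \<partial>(M \<Otimes>\<^sub>M N)) =
     (\<integral>\<^sup>+ t. ennreal (KK p M N t) * indicator {0<..} t \<partial>lborel)"
proof -
  have pQ: "prob_space (M \<Otimes>\<^sub>M N)" by (rule prob_space_pair[OF M(2) N(2)])
  interpret Q: prob_space "M \<Otimes>\<^sub>M N" by (rule pQ)
  have f: "(\<lambda>w. dist (fst w) (snd w) powr p) \<in> borel_measurable (M \<Otimes>\<^sub>M N)"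
    by (rule meas_Q[OF M(1) N(1) meas_dp3])
  show ?thesis
    unfolding layer_cake'[OF prob_space_imp_sigma_finite[OF pQ] f powr_ge_zero] KK_def
    by (simp add: Q.emeasure_eq_measure)
qed

lemma KK_meas:
  fixes M N :: "'a::polish_space measure"
  assumes M: "sets M = sets borel" "prob_space M" and N: "sets N = sets borel" "prob_space N"
  shows "KK p M N \<in> borel_measurable borel"
proof -
  have pQ: "prob_space (M \<Otimes>\<^sub>M N)" by (rule prob_space_pair[OF M(2) N(2)])
  interpret Q: prob_space "M \<Otimes>\<^sub>M N" by (rule pQ)
  have f: "(\<lambda>w. dist (fst w) (snd w) powr p) \<in> borel_measurable (M \<Otimes>\<^sub>M N)"
    by (rule meas_Q[OF M(1) N(1) meas_dp3])
  have "mono (\<lambda>t. - KK p M N t)"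
  proof (rule monoI)
    fix s t :: real assume st: "s \<le> t"
    have "KK p M N t \<le> KK p M N s" unfolding KK_def
      using st borel_measurable_less[OF borel_measurable_const f, of s]
      by (intro Q.finite_measure_mono) auto
    then show "- KK p M N s \<le> - KK p M N t" by simp
  qed
  then have "(\<lambda>t. - KK p M N t) \<in> borel_measurable borel" by (rule borel_measurable_mono)
  then have "(\<lambda>t. - (- KK p M N t)) \<in> borel_measurable borel" by (rule borel_measurable_uminus)
  then show ?thesis by simp
qed

lemma pot_eq:
  fixes \<alpha> \<beta> :: "'a::polish_space measure"
  assumes U: "ultrametric TYPE('a)" and p: "0 < p"
    and aW: "\<alpha> \<in> wasserstein_space p" and bW: "\<beta> \<in> wasserstein_space p"
    and eqp: "\<And>z. (\<integral>\<^sup>+ y. ennreal (dist y z powr p) \<partial>\<alpha>) = (\<integral>\<^sup>+ y. ennreal (dist y z powr p) \<partial>\<beta>)"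
  shows "\<alpha> = \<beta>"
proof -
  note A = wsD[OF aW] and B = wsD[OF bW]
  interpret A: prob_space \<alpha> by (rule A(2))
  interpret B: prob_space \<beta> by (rule B(2))
  interpret P: pair_prob_space \<alpha> \<beta> by unfold_locales
  define pot where "pot M x = (\<integral>\<^sup>+ y. ennreal (dist y x powr p) \<partial>M)" for M :: "'a measure" and x :: 'a
  define L where "L M N = (\<integral>\<^sup>+ w. ennreal (dist (fst w) (snd w) powr p) \<partial>(M \<Otimes>\<^sub>M N))" for M N :: "'a measure"
  have potE: "pot \<alpha> = pot \<beta>" unfolding pot_def using eqp by (intro ext) simp
  have Lab: "L \<alpha> \<beta> = (\<integral>\<^sup>+ x. pot \<beta> x \<partial>\<alpha>)" unfolding L_def pot_def by (rule Lpot[OF A(1,2) B(1,2)])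
  have Laa: "L \<alpha> \<alpha> = (\<integral>\<^sup>+ x. pot \<alpha> x \<partial>\<alpha>)" unfolding L_def pot_def by (rule Lpot[OF A(1,2) A(1,2)])
  have Lbb: "L \<beta> \<beta> = (\<integral>\<^sup>+ x. pot \<beta> x \<partial>\<beta>)" unfolding L_def pot_def by (rule Lpot[OF B(1,2) B(1,2)])
  have fm: "(\<lambda>(x, y). ennreal (dist x y powr p)) \<in> borel_measurable (\<alpha> \<Otimes>\<^sub>M \<beta>)"
    unfolding case_prod_beta' by (rule meas_Q[OF A(1) B(1)], rule measurable_compose[OF meas_dp3]) simp
  have fub: "(\<integral>\<^sup>+ y. pot \<alpha> y \<partial>\<beta>) = (\<integral>\<^sup>+ x. pot \<beta> x \<partial>\<alpha>)"
    unfolding pot_def using P.Fubini'[OF fm] by (simp add: dist_commute)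
  have L1: "L \<alpha> \<alpha> = L \<alpha> \<beta>" using Laa Lab potE by simp
  have L2: "L \<beta> \<beta> = L \<alpha> \<beta>" using Lbb Lab potE fub by simp
  obtain x0 :: 'a where True by simp
  have Lfin: "L \<alpha> \<beta> < \<top>"
  proof -
    define Mb where "Mb = (\<integral>\<^sup>+ y. ennreal (dist y x0 powr p) \<partial>\<beta>)"
    have Mb: "Mb < \<top>" unfolding Mb_def by (rule ws_moment[OF U p bW])
    have bnd: "pot \<beta> x \<le> Mb + ennreal (dist x0 x powr p)" for x
    proof -
      have "pot \<beta> x \<le> (\<integral>\<^sup>+ y. ennreal (dist y x0 powr p) + ennreal (dist x0 x powr p) \<partial>\<beta>)"
        unfolding pot_def
        by (intro nn_integral_mono) (simp add: ennreal_plus[symmetric] del: ennreal_plus add: ultra_powr_add[OF U p])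
      also have "\<dots> = Mb + (\<integral>\<^sup>+ y. ennreal (dist x0 x powr p) \<partial>\<beta>)"
        unfolding Mb_def by (rule nn_integral_add) (rule meas_sets[OF B(1) mdpe], simp)
      also have "(\<integral>\<^sup>+ y. ennreal (dist x0 x powr p) \<partial>\<beta>) = ennreal (dist x0 x powr p)"
        using B.emeasure_space_1 by simp
      finally show ?thesis .
    qed
    have "L \<alpha> \<beta> \<le> (\<integral>\<^sup>+ x. Mb + ennreal (dist x0 x powr p) \<partial>\<alpha>)"
      unfolding Lab by (intro nn_integral_mono bnd)
    also have "\<dots> = (\<integral>\<^sup>+ x. Mb \<partial>\<alpha>) + (\<integral>\<^sup>+ x. ennreal (dist x0 x powr p) \<partial>\<alpha>)"
      by (rule nn_integral_add) (simp, rule meas_sets[OF A(1) mdp2e])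
    also have "(\<integral>\<^sup>+ x. Mb \<partial>\<alpha>) = Mb" using A.emeasure_space_1 by simp
    also have "Mb + (\<integral>\<^sup>+ x. ennreal (dist x0 x powr p) \<partial>\<alpha>) < \<top>"
      using Mb ws_moment'[OF U p aW, of x0] by simp
    finally show ?thesis .
  qed
  define R where "R t = 2 * KK p \<alpha> \<beta> t - KK p \<alpha> \<alpha> t - KK p \<beta> \<beta> t" for t
  have Rsum: "R t = (\<Sum>n. (measure \<alpha> (Part p t n) - measure \<beta> (Part p t n))\<^sup>2)"
    "summable (\<lambda>n. (measure \<alpha> (Part p t n) - measure \<beta> (Part p t n))\<^sup>2)" if t: "0 < t" for t
    unfolding R_def KK_def using Rform[OF U p t A(1,2) B(1,2)] by auto
  have Rnn: "0 \<le> R t" if t: "0 < t" for t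
    using Rsum[OF t] by (simp add: suminf_nonneg)
  have KKnn: "0 \<le> KK p M N t" for M N t unfolding KK_def by simp
  have pt: "(ennreal (KK p \<alpha> \<alpha> t) * indicator {0<..} t + ennreal (KK p \<beta> \<beta> t) * indicator {0<..} t)
       + ennreal (R t) * indicator {0<..} t
     = ennreal (KK p \<alpha> \<beta> t) * indicator {0<..} t + ennreal (KK p \<alpha> \<beta> t) * indicator {0<..} t" for t
  proof (cases "0 < t")
    case True
    have "ennreal (KK p \<alpha> \<alpha> t) + ennreal (KK p \<beta> \<beta> t) + ennreal (R t) = ennreal (KK p \<alpha> \<alpha> t + KK p \<beta> \<beta> t + R t)"
      using KKnn[of \<alpha> \<alpha> t] KKnn[of \<beta> \<beta> t] Rnn[OF True] by (simp add: ennreal_plus[symmetric] del: ennreal_plus)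
    also have "KK p \<alpha> \<alpha> t + KK p \<beta> \<beta> t + R t = KK p \<alpha> \<beta> t + KK p \<alpha> \<beta> t" unfolding R_def by simp
    also have "ennreal (KK p \<alpha> \<beta> t + KK p \<alpha> \<beta> t) = ennreal (KK p \<alpha> \<beta> t) + ennreal (KK p \<alpha> \<beta> t)"
      using KKnn[of \<alpha> \<beta> t] by (rule ennreal_plus) (rule KKnn)
    finally show ?thesis using True by simp
  qed simp
  have mK: "(\<lambda>t. ennreal (KK p M N t) * indicator {0<..} t) \<in> borel_measurable lborel"
    if "sets M = sets borel" "prob_space M" "sets N = sets borel" "prob_space N" for M N :: "'a measure"
  proof -
    have "(\<lambda>t. ennreal (KK p M N t)) \<in> borel_measurable borel"
      using KK_meas[OF that] by (rule measurable_compose) simp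
    then have "(\<lambda>t. ennreal (KK p M N t) * indicator {0<..} t) \<in> borel_measurable borel"
      by (rule borel_measurable_times_ennreal) (rule borel_measurable_indicator, simp)
    then show ?thesis by simp
  qed
  have mR: "(\<lambda>t. ennreal (R t) * indicator {0<..} t) \<in> borel_measurable lborel"
  proof -
    have k1: "KK p \<alpha> \<beta> \<in> borel_measurable borel" by (rule KK_meas[OF A(1,2) B(1,2)])
    have k2: "KK p \<alpha> \<alpha> \<in> borel_measurable borel" by (rule KK_meas[OF A(1,2) A(1,2)])
    have k3: "KK p \<beta> \<beta> \<in> borel_measurable borel" by (rule KK_meas[OF B(1,2) B(1,2)])
    have "(\<lambda>t. 2 * KK p \<alpha> \<beta> t) \<in> borel_measurable borel"
      using borel_measurable_const k1 by (rule borel_measurable_times)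
    then have "(\<lambda>t. 2 * KK p \<alpha> \<beta> t - KK p \<alpha> \<alpha> t) \<in> borel_measurable borel"
      using k2 by (rule borel_measurable_diff)
    then have "R \<in> borel_measurable borel"
      using k3 unfolding R_def by (rule borel_measurable_diff)
    then have "(\<lambda>t. ennreal (R t)) \<in> borel_measurable borel"
      by (rule measurable_compose) simp
    then have "(\<lambda>t. ennreal (R t) * indicator {0<..} t) \<in> borel_measurable borel"
      by (rule borel_measurable_times_ennreal) (rule borel_measurable_indicator, simp)
    then show ?thesis by simp
  qed
  define XR where "XR = (\<integral>\<^sup>+ t. ennreal (R t) * indicator {0<..} t \<partial>lborel)"
  have cake: "L M N = (\<integral>\<^sup>+ t. ennreal (KK p M N t) * indicator {0<..} t \<partial>lborel)"
    if "sets M = sets borel" "prob_space M" "sets N = sets borel" "prob_space N" for M N :: "'a measure"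
    unfolding L_def by (rule Lcake[OF that])
  have "(L \<alpha> \<alpha> + L \<beta> \<beta>) + XR =
      (\<integral>\<^sup>+ t. (ennreal (KK p \<alpha> \<alpha> t) * indicator {0<..} t + ennreal (KK p \<beta> \<beta> t) * indicator {0<..} t)
        + ennreal (R t) * indicator {0<..} t \<partial>lborel)"
    unfolding cake[OF A(1,2) A(1,2)] cake[OF B(1,2) B(1,2)] XR_def
    using mK[OF A(1,2) A(1,2)] mK[OF B(1,2) B(1,2)] mR
    by (simp add: nn_integral_add)
  also have "\<dots> = (\<integral>\<^sup>+ t. ennreal (KK p \<alpha> \<beta> t) * indicator {0<..} t + ennreal (KK p \<alpha> \<beta> t) * indicator {0<..} t \<partial>lborel)"
    by (simp only: pt)
  also have "\<dots> = L \<alpha> \<beta> + L \<alpha> \<beta>"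
    unfolding cake[OF A(1,2) B(1,2)]
    using mK[OF A(1,2) B(1,2)] by (simp add: nn_integral_add)
  finally have "(L \<alpha> \<beta> + L \<alpha> \<beta>) + XR = (L \<alpha> \<beta> + L \<alpha> \<beta>) + 0" using L1 L2 by simp
  then have XR0: "XR = 0" using Lfin by (auto simp: ennreal_add_left_cancel)
  then have "AE t in lborel. ennreal (R t) * indicator {0<..} t = 0"
    unfolding XR_def using mR by (simp add: nn_integral_0_iff_AE)
  then have ae: "AE t in lborel. 0 < t \<longrightarrow> (\<forall>z. emeasure \<alpha> (Bl p z t) = emeasure \<beta> (Bl p z t))"
  proof (rule AE_mp, intro AE_I2 impI)
    fix t :: real assume h: "ennreal (R t) * indicator {0<..} t = 0" and t: "0 < t"
    have "ennreal (R t) = 0" using h t by simp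
    then have "R t \<le> 0" by (simp only: ennreal_eq_0_iff)
    then have R0: "R t = 0" using Rnn[OF t] by simp
    have sq0: "(measure \<alpha> (Part p t n) - measure \<beta> (Part p t n))\<^sup>2 = 0" for n
      using R0 Rsum[OF t] suminf_eq_zero_iff[OF Rsum(2)[OF t]] by simp
    have eqn: "measure \<alpha> (Part p t n) = measure \<beta> (Part p t n)" for n using sq0[of n] by simp
    note PP = Part[OF U p t]
    show "\<forall>z. emeasure \<alpha> (Bl p z t) = emeasure \<beta> (Bl p z t)"
    proof
      fix z :: 'a
      obtain n where n: "z \<in> Part p t n" using PP(3) by blast
      have "Bl p z t = Part p t n" by (rule PP(4)[OF n])
      then show "emeasure \<alpha> (Bl p z t) = emeasure \<beta> (Bl p z t)"
        using eqn[of n] by (simp add: A.emeasure_eq_measure B.emeasure_eq_measure)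
    qed
  qed
  show ?thesis
    by (rule eq_on_balls[OF U p A(1,2) B(1,2)]) (rule extend_good[OF A(1,2) B(1,2) ae])
qed

lemma return_inj:
  assumes "return borel (a::'a::polish_space) = return borel b"
  shows "a = b"
proof -
  have "emeasure (return borel a) {a} = emeasure (return borel b) {a}" using assms by simp
  then show ?thesis by (auto simp: indicator_def split: if_splits)
qed

lemma Tc_dirac_dirac:
  fixes a b :: "'a::polish_space"
  shows "Tc p (return borel a) (return borel b) = dist a b powr p"
  using Tc_dirac_snd[OF return_ws[of a p], of b]
  by (simp add: nn_integral_return mdpe)

definition Betw :: "real \<Rightarrow> 'a::polish_space measure \<Rightarrow> bool" where
  "Betw p \<mu> \<longleftrightarrow> (\<exists>\<nu>1\<in>wasserstein_space p. \<exists>\<nu>2\<in>wasserstein_space p. \<nu>1 \<noteq> \<mu> \<and> \<nu>2 \<noteq> \<mu> \<and>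
           Tc p \<nu>1 \<mu> + Tc p \<mu> \<nu>2 \<le> Tc p \<nu>1 \<nu>2)"

lemma dirac_iff_not_betw:
  fixes \<mu> :: "'a::polish_space measure"
  assumes U: "ultrametric TYPE('a)" and p: "0 < p" and mu: "\<mu> \<in> wasserstein_space p"
  shows "(\<exists>x. \<mu> = return borel x) \<longleftrightarrow> \<not> Betw p \<mu>"
proof
  assume "\<exists>x. \<mu> = return borel x"
  then obtain x where x: "\<mu> = return borel x" by blast
  show "\<not> Betw p \<mu>"
  proof
    assume "Betw p \<mu>"
    then obtain \<nu>1 \<nu>2 where n: "\<nu>1 \<in> wasserstein_space p" "\<nu>2 \<in> wasserstein_space p" "\<nu>1 \<noteq> \<mu>" "\<nu>2 \<noteq> \<mu>"
      "Tc p \<nu>1 \<mu> + Tc p \<mu> \<nu>2 \<le> Tc p \<nu>1 \<nu>2" unfolding Betw_def by blast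
    have "Tc p \<nu>1 \<nu>2 < Tc p \<nu>1 \<mu> + Tc p \<mu> \<nu>2"
      using dirac_strict[OF U p n(1,2), of x] n(3,4) x by simp
    then show False using n(5) by simp
  qed
next
  assume "\<not> Betw p \<mu>"
  then show "\<exists>x. \<mu> = return borel x"
    using nondirac_between[OF U p mu] unfolding Betw_def by blast
qed

lemma main_result:
  fixes p :: real and \<Phi> :: "('a::polish_space) measure \<Rightarrow> 'a measure"
  assumes U: "ultrametric TYPE('a)"
    and p: "0 < p"
    and bij: "bij_betw \<Phi> (wasserstein_space p) (wasserstein_space p)"
    and iso: "\<And>\<mu> \<nu>. \<mu> \<in> wasserstein_space p \<Longrightarrow> \<nu> \<in> wasserstein_space p \<Longrightarrow>
           wasserstein_dist p (\<Phi> \<mu>) (\<Phi> \<nu>) = wasserstein_dist p \<mu> \<nu>"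
  shows "\<exists>\<psi>::'a \<Rightarrow> 'a. bij \<psi> \<and> (\<forall>x y. dist (\<psi> x) (\<psi> y) = dist x y) \<and>
           (\<forall>\<mu>\<in>wasserstein_space p. \<Phi> \<mu> = distr \<mu> borel \<psi>)"
proof -
  let ?W = "wasserstein_space p :: 'a measure set"
  have TcP: "Tc p (\<Phi> \<mu>) (\<Phi> \<nu>) = Tc p \<mu> \<nu>" if "\<mu> \<in> ?W" "\<nu> \<in> ?W" for \<mu> \<nu>
    using Tc_eqI[OF p iso[OF that]] .
  have PW: "\<Phi> \<mu> \<in> ?W" if "\<mu> \<in> ?W" for \<mu> using bij_betw_apply[OF bij that] .
  have inj: "inj_on \<Phi> ?W" using bij_betw_imp_inj_on[OF bij] .
  have surj: "\<Phi> ` ?W = ?W" using bij_betw_imp_surj_on[OF bij] .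
  have betw_iff: "Betw p (\<Phi> \<mu>) \<longleftrightarrow> Betw p \<mu>" if mu: "\<mu> \<in> ?W" for \<mu>
  proof
    assume "Betw p (\<Phi> \<mu>)"
    then obtain \<nu>1' \<nu>2' where n: "\<nu>1' \<in> ?W" "\<nu>2' \<in> ?W" "\<nu>1' \<noteq> \<Phi> \<mu>" "\<nu>2' \<noteq> \<Phi> \<mu>"
      "Tc p \<nu>1' (\<Phi> \<mu>) + Tc p (\<Phi> \<mu>) \<nu>2' \<le> Tc p \<nu>1' \<nu>2'" unfolding Betw_def by blast
    obtain \<nu>1 where n1: "\<nu>1 \<in> ?W" "\<nu>1' = \<Phi> \<nu>1" using n(1) surj by blast
    obtain \<nu>2 where n2: "\<nu>2 \<in> ?W" "\<nu>2' = \<Phi> \<nu>2" using n(2) surj by blast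
    have "\<nu>1 \<noteq> \<mu>" "\<nu>2 \<noteq> \<mu>" using n(3,4) n1 n2 by auto
    moreover have "Tc p \<nu>1 \<mu> + Tc p \<mu> \<nu>2 \<le> Tc p \<nu>1 \<nu>2"
      using n(5) n1 n2 TcP[OF n1(1) mu] TcP[OF mu n2(1)] TcP[OF n1(1) n2(1)] by simp
    ultimately show "Betw p \<mu>" unfolding Betw_def using n1(1) n2(1) by blast
  next
    assume "Betw p \<mu>"
    then obtain \<nu>1 \<nu>2 where n: "\<nu>1 \<in> ?W" "\<nu>2 \<in> ?W" "\<nu>1 \<noteq> \<mu>" "\<nu>2 \<noteq> \<mu>"
      "Tc p \<nu>1 \<mu> + Tc p \<mu> \<nu>2 \<le> Tc p \<nu>1 \<nu>2" unfolding Betw_def by blast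
    have "\<Phi> \<nu>1 \<noteq> \<Phi> \<mu>" using inj n(1,3) mu by (auto dest: inj_onD)
    moreover have "\<Phi> \<nu>2 \<noteq> \<Phi> \<mu>" using inj n(2,4) mu by (auto dest: inj_onD)
    moreover have "Tc p (\<Phi> \<nu>1) (\<Phi> \<mu>) + Tc p (\<Phi> \<mu>) (\<Phi> \<nu>2) \<le> Tc p (\<Phi> \<nu>1) (\<Phi> \<nu>2)"
      using n(5) TcP[OF n(1) mu] TcP[OF mu n(2)] TcP[OF n(1) n(2)] by simp
    ultimately show "Betw p (\<Phi> \<mu>)" unfolding Betw_def using PW[OF n(1)] PW[OF n(2)] by blast
  qed
  have dirac_iff: "(\<exists>x. \<Phi> \<mu> = return borel x) \<longleftrightarrow> (\<exists>x. \<mu> = return borel x)" if mu: "\<mu> \<in> ?W" for \<mu>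
    using dirac_iff_not_betw[OF U p PW[OF mu]] dirac_iff_not_betw[OF U p mu] betw_iff[OF mu] by blast
  define \<psi> where "\<psi> x = (SOME y. \<Phi> (return borel x) = return borel y)" for x
  have hpsi: "\<Phi> (return borel x) = return borel (\<psi> x)" for x
  proof -
    have "\<exists>y. \<Phi> (return borel x) = return borel y" using dirac_iff[OF return_ws[of x p]] by blast
    then show ?thesis unfolding \<psi>_def by (rule someI_ex)
  qed
  have isom: "dist (\<psi> a) (\<psi> b) = dist a b" for a b
  proof -
    have e1: "Tc p (\<Phi> (return borel a)) (\<Phi> (return borel b)) = dist (\<psi> a) (\<psi> b) powr p"
      unfolding hpsi by (rule Tc_dirac_dirac)
    have e2: "Tc p (\<Phi> (return borel a)) (\<Phi> (return borel b)) = Tc p (return borel a) (return borel b)"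
      by (rule TcP[OF return_ws return_ws])
    have e3: "Tc p (return borel a) (return borel b) = dist a b powr p" by (rule Tc_dirac_dirac)
    have "dist (\<psi> a) (\<psi> b) powr p = dist a b powr p" using e1 e2 e3 by simp
    then show ?thesis by (rule powr_inj_nonneg[OF zero_le_dist zero_le_dist p])
  qed
  have psi_surj: "surj \<psi>"
  proof -
    have "z \<in> range \<psi>" for z
    proof -
      have "return borel z \<in> ?W" by (rule return_ws)
      then obtain \<mu> where mu: "\<mu> \<in> ?W" "return borel z = \<Phi> \<mu>" using surj by blast
      then obtain x where x: "\<mu> = return borel x" using dirac_iff[OF mu(1)] by metis
      have "return borel z = return borel (\<psi> x)" using mu(2) x hpsi by simp
      then have "z = \<psi> x" by (rule return_inj)
      then show ?thesis by simp
    qed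
    then show ?thesis by blast
  qed
  have psi_inj: "inj \<psi>"
  proof (rule injI)
    fix a b assume "\<psi> a = \<psi> b"
    then have "dist a b = 0" using isom[of a b] by simp
    then show "a = b" by simp
  qed
  have psi_cont: "continuous_on UNIV \<psi>"
  proof -
    have "uniformly_continuous_on UNIV \<psi>"
      unfolding uniformly_continuous_on_def
    proof (intro allI impI)
      fix e :: real assume e: "0 < e"
      show "\<exists>d>0. \<forall>x\<in>UNIV. \<forall>x'\<in>UNIV. dist x' x < d \<longrightarrow> dist (\<psi> x') (\<psi> x) < e"
        using e by (intro exI[of _ e]) (simp add: isom)
    qed
    then show ?thesis by (rule uniformly_continuous_imp_continuous)
  qed
  have psi_meas: "\<psi> \<in> borel_measurable borel" by (rule borel_measurable_continuous_onI[OF psi_cont])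
  have push: "\<Phi> \<mu> = distr \<mu> borel \<psi>" if mu: "\<mu> \<in> ?W" for \<mu>
  proof -
    note M = wsD[OF mu]
    interpret M: prob_space \<mu> by (rule M(2))
    have pm: "\<psi> \<in> measurable \<mu> borel" by (rule meas_sets[OF M(1) psi_meas])
    have potl: "(\<integral>\<^sup>+ y. ennreal (dist y (\<psi> x) powr p) \<partial>distr \<mu> borel \<psi>) = (\<integral>\<^sup>+ w. ennreal (dist w x powr p) \<partial>\<mu>)" for x
    proof -
      have "(\<integral>\<^sup>+ y. ennreal (dist y (\<psi> x) powr p) \<partial>distr \<mu> borel \<psi>) = (\<integral>\<^sup>+ w. ennreal (dist (\<psi> w) (\<psi> x) powr p) \<partial>\<mu>)"
        by (rule nn_integral_distr[OF pm]) (simp add: mdpe)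
      then show ?thesis by (simp add: isom)
    qed
    have lW: "distr \<mu> borel \<psi> \<in> ?W"
    proof -
      obtain x0 :: 'a where True by simp
      have "(\<integral>\<^sup>+ y. ennreal (dist y (\<psi> x0) powr p) \<partial>distr \<mu> borel \<psi>) < \<infinity>"
        using potl[of x0] ws_moment[OF U p mu, of x0] by simp
      then show ?thesis unfolding wasserstein_space_def using M.prob_space_distr[OF pm] by auto
    qed
    have potP: "(\<integral>\<^sup>+ y. ennreal (dist y (\<psi> x) powr p) \<partial>\<Phi> \<mu>) = (\<integral>\<^sup>+ w. ennreal (dist w x powr p) \<partial>\<mu>)" for x
    proof -
      have "Tc p (\<Phi> \<mu>) (return borel (\<psi> x)) = Tc p \<mu> (return borel x)"
        using TcP[OF mu return_ws[of x p]] by (simp add: hpsi)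
      then have e: "enn2real (\<integral>\<^sup>+ y. ennreal (dist y (\<psi> x) powr p) \<partial>\<Phi> \<mu>) = enn2real (\<integral>\<^sup>+ w. ennreal (dist w x powr p) \<partial>\<mu>)"
        using Tc_dirac_snd[OF PW[OF mu]] Tc_dirac_snd[OF mu] by simp
      have f1: "(\<integral>\<^sup>+ y. ennreal (dist y (\<psi> x) powr p) \<partial>\<Phi> \<mu>) < \<top>" by (rule ws_moment[OF U p PW[OF mu]])
      have f2: "(\<integral>\<^sup>+ w. ennreal (dist w x powr p) \<partial>\<mu>) < \<top>" by (rule ws_moment[OF U p mu])
      have "(\<integral>\<^sup>+ y. ennreal (dist y (\<psi> x) powr p) \<partial>\<Phi> \<mu>) = ennreal (enn2real (\<integral>\<^sup>+ y. ennreal (dist y (\<psi> x) powr p) \<partial>\<Phi> \<mu>))"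
        using f1 by simp
      also have "\<dots> = ennreal (enn2real (\<integral>\<^sup>+ w. ennreal (dist w x powr p) \<partial>\<mu>))" using e by simp
      also have "\<dots> = (\<integral>\<^sup>+ w. ennreal (dist w x powr p) \<partial>\<mu>)" using f2 by simp
      finally show ?thesis .
    qed
    have "\<Phi> \<mu> = distr \<mu> borel \<psi>"
    proof (rule pot_eq[OF U p PW[OF mu] lW])
      fix z
      obtain x where "z = \<psi> x" using psi_surj unfolding surj_def by blast
      then show "(\<integral>\<^sup>+ y. ennreal (dist y z powr p) \<partial>\<Phi> \<mu>) = (\<integral>\<^sup>+ y. ennreal (dist y z powr p) \<partial>distr \<mu> borel \<psi>)"
        using potP potl by simp
    qed
    then show ?thesis .
  qed
  have "bij \<psi>" using psi_inj psi_surj by (simp add: bij_def)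
  then show ?thesis
    using isom push by (intro exI[of _ \<psi>]) blast
qed

theorem corollary4p8:
  fixes p :: real and \<Phi> :: "('a::polish_space) measure \<Rightarrow> 'a measure"
  assumes "ultrametric TYPE('a)"
    and "0 < p"
    and "bij_betw \<Phi> (wasserstein_space p) (wasserstein_space p)"
    and "\<And>\<mu> \<nu>. \<mu> \<in> wasserstein_space p \<Longrightarrow> \<nu> \<in> wasserstein_space p \<Longrightarrow>
           wasserstein_dist p (\<Phi> \<mu>) (\<Phi> \<nu>) = wasserstein_dist p \<mu> \<nu>"
  shows "\<exists>\<psi>::'a \<Rightarrow> 'a. bij \<psi> \<and> (\<forall>x y. dist (\<psi> x) (\<psi> y) = dist x y) \<and>
           (\<forall>\<mu>\<in>wasserstein_space p. \<Phi> \<mu> = distr \<mu> borel \<psi>)"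
  by (rule main_result[OF assms])

end
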